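(* Let $K$ be a field, $A=\{\alpha_1,\dots,\alpha_m\}\subset K$, $B=\{\beta_1,\dots,\beta_n\}\subset K$ finite sets with $|A|=m$, $|B|=n$, $f=\prod_{i}(x-\alpha_i)$, $g=\prod_j(x-\beta_j)$, and let $x$ be an indeterminate. Let $0\le k\le\min\{m-1,n-1\}$. Then $$F_k(f,g)=(-1)^{k(m-k)}\sum_{C'\subset A\cup\{x\},\ |C'|=k+1}\frac{\mathcal{R}((A\cup\{x\})\setminus C',B)}{\mathcal{R}(C',(A\cup\{x\})\setminus C')},$$ $$G_k(f,g)=(-1)^{m(n-k)}\sum_{D'\subset B\cup\{x\},\ |D'|=k+1}\frac{\mathcal{R}((B\cup\{x\})\setminus D',A)}{\mathcal{R}(D',(B\cup\{x\})\setminus D')}.$$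
   Context: For finite sets $Y,Z$, $\mathcal{R}(Y,Z):=\prod_{y\in Y,z\in Z}(y-z)$, with $\mathcal{R}(Y,Z)=1$ if $Y$ or $Z$ is empty. Write $f=\sum_{i=0}^m f_ix^i$, $g=\sum_{i=0}^ng_ix^i$ with $f_i=g_i=0$ outside the natural ranges. For $0\le k\le\min\{m-1,n-1\}$ consider the $(m+n-2k)\times(m+n-2k)$ matrices with rows indexed by $(f,j)$, $j=n-k-1,\dots,0$, followed by $(g,j)$, $j=m-k-1,\dots,0$, whose first $m+n-2k-1$ entries in row $(f,j)$ (resp. $(g,j)$) are the coefficients of $x^{m+n-k-1},\dots,x^{k+1}$ in $x^jf$ (resp. $x^jg$). $F_k(f,g)(x)$ is the determinant of such a matrix with last entry $x^j$ in rows $(f,j)$ and $0$ in rows $(g,j)$; $G_k(f,g)(x)$ is the determinant with last entry $0$ in rows $(f,j)$ and $x^j$ in rows $(g,j)$. *)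

theory Defs
  imports "HOL-Computational_Algebra.Polynomial" "HOL-Computational_Algebra.Fraction_Field"
    "Jordan_Normal_Form.Determinant"
begin

definition Res :: "'b::comm_ring_1 set \<Rightarrow> 'b set \<Rightarrow> 'b" where
  "Res Y Z = (\<Prod>y\<in>Y. \<Prod>z\<in>Z. y - z)"

text \<open>Coefficient of x^e in x^j * p, as a constant polynomial.\<close>
definition shcoeff :: "'a::comm_ring_1 poly \<Rightarrow> nat \<Rightarrow> nat \<Rightarrow> 'a poly" where
  "shcoeff p j e = (if j \<le> e then [:coeff p (e - j):] else 0)"

text \<open>Rows i < n-k are (f,j) with j = n-k-1-i,
  rows i >= n-k are (g,j) with j = m-k-1-(i-(n-k)). Columns c < m+n-2k-1 contain
  the coefficient of x^(m+n-k-1-c) in x^j f (resp. x^j g). The last column contains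
  x^j in the f-rows (if fside) or in the g-rows (if not fside), and 0 elsewhere.\<close>
definition sres_mat :: "bool \<Rightarrow> nat \<Rightarrow> nat \<Rightarrow> nat \<Rightarrow> 'a::comm_ring_1 poly \<Rightarrow> 'a poly \<Rightarrow> 'a poly mat" where
  "sres_mat fside m n k f g =
    (let N = m + n - 2 * k in
     mat N N (\<lambda>(i, c).
       let isf = (i < n - k);
           j = (if isf then n - k - 1 - i else m - k - 1 - (i - (n - k)));
           p = (if isf then f else g)
       in if c < N - 1 then shcoeff p j (m + n - k - 1 - c)
          else (if isf = fside then monom 1 j else 0)))"

definition Fk :: "nat \<Rightarrow> nat \<Rightarrow> nat \<Rightarrow> 'a::comm_ring_1 poly \<Rightarrow> 'a poly \<Rightarrow> 'a poly" where
  "Fk m n k f g = det (sres_mat True m n k f g)"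

definition Gk :: "nat \<Rightarrow> nat \<Rightarrow> nat \<Rightarrow> 'a::comm_ring_1 poly \<Rightarrow> 'a poly \<Rightarrow> 'a poly" where
  "Gk m n k f g = det (sres_mat False m n k f g)"

definition to_rf :: "'a::field poly \<Rightarrow> 'a poly fract" where
  "to_rf p = Fract p 1"

definition const_rf :: "'a::field \<Rightarrow> 'a poly fract" where
  "const_rf a = Fract [:a:] 1"

definition X_rf :: "'a::field poly fract" where
  "X_rf = Fract [:0, 1:] 1"

end

theory Submission
  imports Defs
begin

lemma nths_cong: "(\<And>i. i < length xs \<Longrightarrow> i \<in> A \<longleftrightarrow> i \<in> B) \<Longrightarrow> nths xs A = nths xs B"
proof (induct xs arbitrary: A B)
  case (Cons x xs)
  have "nths xs {j. Suc j \<in> A} = nths xs {j. Suc j \<in> B}"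
    by (rule Cons.hyps) (use Cons.prems in auto)
  moreover have "0 \<in> A \<longleftrightarrow> 0 \<in> B" using Cons.prems by auto
  ultimately show ?case by (simp add: nths_Cons)
qed simp

definition dtm :: "(nat \<Rightarrow> 'c \<Rightarrow> 'a::comm_ring_1) \<Rightarrow> 'c list \<Rightarrow> 'a" where
  "dtm \<phi> cs = det (mat (length cs) (length cs) (\<lambda>(i,j). \<phi> i (cs!j)))"

lemma dtm_Nil[simp]: "dtm \<phi> [] = 1"
  unfolding dtm_def by (rule det_dim_zero) auto

lemma dtm_snoc: "dtm \<phi> (cs @ [y]) =
  (\<Sum>i<Suc (length cs). (-1)^(i + length cs) * \<phi> i y * dtm (\<lambda>i'. \<phi> (insert_index i i')) cs)"
proof -
  let ?r = "length cs"
  define A where "A = mat (Suc ?r) (Suc ?r) (\<lambda>(i,j). \<phi> i ((cs@[y])!j))"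
  have A: "A \<in> carrier_mat (Suc ?r) (Suc ?r)" unfolding A_def by auto
  have "dtm \<phi> (cs @ [y]) = det A" unfolding dtm_def A_def by simp
  also have "\<dots> = (\<Sum>i<Suc ?r. A $$ (i, ?r) * cofactor A i ?r)"
    by (rule laplace_expansion_column[OF A]) simp
  also have "\<dots> = (\<Sum>i<Suc ?r. (-1)^(i + ?r) * \<phi> i y * dtm (\<lambda>i'. \<phi> (insert_index i i')) cs)"
  proof (rule sum.cong[OF refl])
    fix i assume i: "i \<in> {..<Suc ?r}"
    have "mat_delete A i ?r = mat ?r ?r (\<lambda>(i',j). \<phi> (insert_index i i') (cs!j))"
      unfolding mat_delete_def A_def insert_index_def
      by (rule eq_matI) (auto simp: nth_append)
    then show "A $$ (i, ?r) * cofactor A i ?r = (-1)^(i + ?r) * \<phi> i y * dtm (\<lambda>i'. \<phi> (insert_index i i')) cs"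
      using i unfolding cofactor_def dtm_def A_def by simp
  qed
  finally show ?thesis .
qed

definition sgJ :: "nat set \<Rightarrow> 'a::comm_ring_1" where
  "sgJ J = (-1) ^ (\<Sum>c\<in>J. card ({..<c} - J))"

lemma dtm_cong: "(\<And>i c. i < length cs \<Longrightarrow> c \<in> set cs \<Longrightarrow> \<phi> i c = \<psi> i c) \<Longrightarrow> dtm \<phi> cs = dtm \<psi> cs"
  unfolding dtm_def by (intro arg_cong[of _ _ det] eq_matI) auto

lemma length_nths_sub: "J \<subseteq> {..<length cs} \<Longrightarrow> length (nths cs J) = card J"
  unfolding length_nths by (rule arg_cong[of _ _ card]) auto

lemma nths_snoc_in: "J \<subseteq> {..<length cs} \<Longrightarrow> nths (cs @ [y]) (insert (length cs) J) = nths cs J @ [y]"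
proof -
  assume J: "J \<subseteq> {..<length cs}"
  have "nths cs (insert (length cs) J) = nths cs J" by (rule nths_cong) auto
  moreover have "nths [y] {j. j + length cs \<in> insert (length cs) J} = [y]"
    by (simp add: nths_singleton)
  ultimately show ?thesis by (simp add: nths_append)
qed

lemma nths_snoc_out: "J \<subseteq> {..<length cs} \<Longrightarrow> nths (cs @ [y]) J = nths cs J"
proof -
  assume J: "J \<subseteq> {..<length cs}"
  have "nths [y] {j. j + length cs \<in> J} = []"
    using J by (auto simp: nths_singleton)
  then show ?thesis by (simp add: nths_append)
qed

lemma sgJ_insert: assumes J: "J \<subseteq> {..<r}" and fin: "finite J"
  shows "sgJ (insert r J) = (-1)^(r - card J) * (sgJ J :: 'a::comm_ring_1)"
proof -
  have rJ: "r \<notin> J" using J by auto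
  have "(\<Sum>c\<in>insert r J. card ({..<c} - insert r J)) = card ({..<r} - J) + (\<Sum>c\<in>J. card ({..<c} - J))"
    using fin rJ J by (auto intro!: sum.cong arg_cong[of _ _ card])
  moreover have "card ({..<r} - J) = r - card J" using J fin by (simp add: card_Diff_subset)
  ultimately show ?thesis unfolding sgJ_def by (simp add: power_add)
qed

definition Fam :: "nat \<Rightarrow> nat \<Rightarrow> nat set set" where
  "Fam r p = {J. J \<subseteq> {..<r} \<and> card J = p}"

lemma finite_Fam[simp]: "finite (Fam r p)"
  unfolding Fam_def by (rule finite_subset[of _ "Pow {..<r}"]) auto

lemma Fam_Suc: "Fam (Suc r) p = {J \<in> Fam (Suc r) p. r \<in> J} \<union> Fam r p"
  unfolding Fam_def by (auto simp: less_Suc_eq)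

lemma Fam_in_Suc: "p > 0 \<Longrightarrow> {J \<in> Fam (Suc r) p. r \<in> J} = insert r ` Fam r (p - 1)"
proof (intro equalityI subsetI)
  fix J assume p: "p > 0" and "J \<in> {J \<in> Fam (Suc r) p. r \<in> J}"
  then have J: "J \<subseteq> {..<Suc r}" "card J = p" "r \<in> J" unfolding Fam_def by auto
  have fin: "finite J" using J(1) finite_subset by blast
  have "J - {r} \<in> Fam r (p - 1)" using J fin unfolding Fam_def by (auto simp: less_Suc_eq)
  moreover have "J = insert r (J - {r})" using J by auto
  ultimately show "J \<in> insert r ` Fam r (p - 1)" by blast
next
  fix J assume p: "p > 0" and "J \<in> insert r ` Fam r (p - 1)"
  then obtain J' where J': "J' \<subseteq> {..<r}" "card J' = p - 1" "J = insert r J'" unfolding Fam_def by auto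
  have fin: "finite J'" using J'(1) finite_subset by blast
  have "r \<notin> J'" using J' by auto
  then show "J \<in> {J \<in> Fam (Suc r) p. r \<in> J}" using J' fin p unfolding Fam_def by auto
qed

theorem gen_laplace:
  fixes \<phi> :: "nat \<Rightarrow> 'c \<Rightarrow> 'a::comm_ring_1" and cs :: "'c list"
  shows "p \<le> length cs \<Longrightarrow> dtm \<phi> cs = (\<Sum>J\<in>Fam (length cs) p.
     sgJ J * dtm \<phi> (nths cs J) * dtm (\<lambda>i. \<phi> (i + p)) (nths cs ({..<length cs} - J)))"
proof (induct cs arbitrary: \<phi> p rule: rev_induct)
  case Nil
  then have "Fam 0 p = {{}}" unfolding Fam_def by auto
  then show ?case using Nil by (simp add: sgJ_def)
next
  case (snoc y cs)
  let ?r = "length cs"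
  let ?\<psi> = "\<lambda>i. \<phi> (i + p)"
  define t where "t i = (-1)^(i + ?r) * \<phi> i y * dtm (\<lambda>i'. \<phi> (insert_index i i')) cs" for i
  define trm where "trm J = sgJ J * dtm \<phi> (nths (cs @ [y]) J) * dtm ?\<psi> (nths (cs @ [y]) ({..<Suc ?r} - J))" for J
  have p: "p \<le> Suc ?r" using snoc by simp
  have lhs: "dtm \<phi> (cs @ [y]) = sum t {..<p} + sum t {p..<Suc ?r}"
  proof -
    have "{..<Suc ?r} = {..<p} \<union> {p..<Suc ?r}" using p by auto
    then have "sum t {..<Suc ?r} = sum t {..<p} + sum t {p..<Suc ?r}"
    proof -
      have "sum t ({..<p} \<union> {p..<Suc ?r}) = sum t {..<p} + sum t {p..<Suc ?r}"
        by (rule sum.union_disjoint) auto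
      then show ?thesis using \<open>{..<Suc ?r} = _\<close> by simp
    qed
    then show ?thesis unfolding dtm_snoc t_def by simp
  qed
  have rhs: "sum trm (Fam (Suc ?r) p) = sum trm {J \<in> Fam (Suc ?r) p. ?r \<in> J} + sum trm (Fam ?r p)"
    by (subst Fam_Suc, rule sum.union_disjoint) (auto simp: Fam_def)
  have part1: "sum t {..<p} = sum trm {J \<in> Fam (Suc ?r) p. ?r \<in> J}"
  proof (cases "p = 0")
    case True
    have e: "{J \<in> Fam (Suc ?r) p. ?r \<in> J} = {}" unfolding Fam_def True
      using finite_subset[of _ "{..<Suc ?r}"] by auto
    show ?thesis unfolding e using True by simp
  next
    case False
    define q where "q = p - 1"
    have pq: "p = Suc q" using False q_def by simp
    have qr: "q \<le> ?r" using p pq by simp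
    have "sum t {..<p} = (\<Sum>i<p. (-1)^(i + ?r) * \<phi> i y * (\<Sum>J\<in>Fam ?r q.
         sgJ J * dtm (\<lambda>i'. \<phi> (insert_index i i')) (nths cs J) *
         dtm ?\<psi> (nths cs ({..<?r} - J))))"
    proof (rule sum.cong[OF refl])
      fix i assume i: "i \<in> {..<p}"
      have "dtm (\<lambda>i'. \<phi> (insert_index i i')) cs = (\<Sum>J\<in>Fam ?r q.
         sgJ J * dtm (\<lambda>i'. \<phi> (insert_index i i')) (nths cs J) *
         dtm (\<lambda>i'. \<phi> (insert_index i (i' + q))) (nths cs ({..<?r} - J)))"
        by (rule snoc.hyps[OF qr])
      also have "\<dots> = (\<Sum>J\<in>Fam ?r q.
         sgJ J * dtm (\<lambda>i'. \<phi> (insert_index i i')) (nths cs J) *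
         dtm ?\<psi> (nths cs ({..<?r} - J)))"
        using i pq by (intro sum.cong refl arg_cong2[of _ _ _ _ "(*)"] arg_cong[of _ _ "\<lambda>x. dtm x _"] ext)
          (auto simp: insert_index_def)
      finally show "t i = (-1)^(i + ?r) * \<phi> i y * (\<Sum>J\<in>Fam ?r q.
         sgJ J * dtm (\<lambda>i'. \<phi> (insert_index i i')) (nths cs J) *
         dtm ?\<psi> (nths cs ({..<?r} - J)))" unfolding t_def by simp
    qed
    also have "\<dots> = (\<Sum>J\<in>Fam ?r q. sgJ J * dtm ?\<psi> (nths cs ({..<?r} - J)) *
         (\<Sum>i<p. (-1)^(i + ?r) * \<phi> i y * dtm (\<lambda>i'. \<phi> (insert_index i i')) (nths cs J)))"
      apply (simp only: sum_distrib_left)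
      apply (subst sum.swap[where A="{..<p}"])
      apply (intro sum.cong refl)
      apply (simp add: mult_ac)
      done
    also have "\<dots> = (\<Sum>J\<in>Fam ?r q. trm (insert ?r J))"
    proof (rule sum.cong[OF refl])
      fix J assume J: "J \<in> Fam ?r q"
      then have Jr: "J \<subseteq> {..<?r}" and cJ: "card J = q" unfolding Fam_def by auto
      have fin: "finite J" using Jr finite_subset by blast
      have len: "length (nths cs J) = q" using length_nths_sub[OF Jr] cJ by simp
      have "(\<Sum>i<p. (-1)^(i + ?r) * \<phi> i y * dtm (\<lambda>i'. \<phi> (insert_index i i')) (nths cs J))
          = (-1)^(?r - q) * (\<Sum>i<p. (-1)^(i + q) * \<phi> i y * dtm (\<lambda>i'. \<phi> (insert_index i i')) (nths cs J))"
      proof -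
        have "(-1::'a)^(i + ?r) = (-1)^(?r - q) * (-1)^(i + q)" for i
          using qr by (simp add: power_add[symmetric] add.commute)
        then show ?thesis by (simp add: sum_distrib_left mult_ac)
      qed
      also have "(\<Sum>i<p. (-1)^(i + q) * \<phi> i y * dtm (\<lambda>i'. \<phi> (insert_index i i')) (nths cs J))
         = dtm \<phi> (nths cs J @ [y])" unfolding dtm_snoc len pq by simp
      finally have eq: "(\<Sum>i<p. (-1)^(i + ?r) * \<phi> i y * dtm (\<lambda>i'. \<phi> (insert_index i i')) (nths cs J))
          = (-1)^(?r - q) * dtm \<phi> (nths cs J @ [y])" .
      have d: "{..<Suc ?r} - insert ?r J = {..<?r} - J" by auto
      have o: "nths (cs@[y]) ({..<?r} - J) = nths cs ({..<?r} - J)" by (rule nths_snoc_out) auto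
      show "sgJ J * dtm ?\<psi> (nths cs ({..<?r} - J)) *
         (\<Sum>i<p. (-1)^(i + ?r) * \<phi> i y * dtm (\<lambda>i'. \<phi> (insert_index i i')) (nths cs J))
         = trm (insert ?r J)"
        unfolding eq trm_def d nths_snoc_in[OF Jr] o
          sgJ_insert[OF Jr fin] cJ by (simp add: mult_ac)
    qed
    also have "\<dots> = sum trm (insert ?r ` Fam ?r q)"
    proof (rule sum.reindex[symmetric, unfolded comp_def])
      show "inj_on (insert ?r) (Fam ?r q)" unfolding inj_on_def Fam_def
      proof (intro ballI impI)
        fix x z assume "x \<in> {J. J \<subseteq> {..<?r} \<and> card J = q}" "z \<in> {J. J \<subseteq> {..<?r} \<and> card J = q}"
          "insert ?r x = insert ?r z"
        then have "?r \<notin> x" "?r \<notin> z" "insert ?r x = insert ?r z" by auto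
        then show "x = z" by (metis Diff_insert_absorb)
      qed
    qed
    also have "insert ?r ` Fam ?r q = {J \<in> Fam (Suc ?r) p. ?r \<in> J}"
      using Fam_in_Suc[of p ?r] False q_def by simp
    finally show ?thesis .
  qed
  have part2: "sum t {p..<Suc ?r} = sum trm (Fam ?r p)"
  proof (cases "p = Suc ?r")
    case True
    have "Fam ?r p = {}"
    proof -
      have False if "J \<subseteq> {..<?r}" "card J = p" for J
      proof -
        have "card J \<le> ?r" using card_mono[of "{..<?r}" J] that by simp
        then show False using that True by simp
      qed
      then show ?thesis unfolding Fam_def by blast
    qed
    then show ?thesis using True by simp
  next
    case False
    then have pr: "p \<le> ?r" using p by simp
    have "sum t {p..<Suc ?r} = (\<Sum>i\<in>{p..<Suc ?r}. (-1)^(i + ?r) * \<phi> i y * (\<Sum>J\<in>Fam ?r p.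
         sgJ J * dtm \<phi> (nths cs J) *
         dtm (\<lambda>i'. ?\<psi> (insert_index (i - p) i')) (nths cs ({..<?r} - J))))"
    proof (rule sum.cong[OF refl])
      fix i assume i: "i \<in> {p..<Suc ?r}"
      have "dtm (\<lambda>i'. \<phi> (insert_index i i')) cs = (\<Sum>J\<in>Fam ?r p.
         sgJ J * dtm (\<lambda>i'. \<phi> (insert_index i i')) (nths cs J) *
         dtm (\<lambda>i'. \<phi> (insert_index i (i' + p))) (nths cs ({..<?r} - J)))"
        by (rule snoc.hyps[OF pr])
      also have "\<dots> = (\<Sum>J\<in>Fam ?r p.
         sgJ J * dtm \<phi> (nths cs J) *
         dtm (\<lambda>i'. ?\<psi> (insert_index (i - p) i')) (nths cs ({..<?r} - J)))"
      proof (rule sum.cong[OF refl])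
        fix J assume J: "J \<in> Fam ?r p"
        then have Jr: "J \<subseteq> {..<?r}" and cJ: "card J = p" unfolding Fam_def by auto
        have "dtm (\<lambda>i'. \<phi> (insert_index i i')) (nths cs J) = dtm \<phi> (nths cs J)"
          by (rule dtm_cong) (use i length_nths_sub[OF Jr] cJ in \<open>auto simp: insert_index_def\<close>)
        moreover have "(\<lambda>i'. \<phi> (insert_index i (i' + p))) = (\<lambda>i'. ?\<psi> (insert_index (i - p) i'))"
          using i by (intro ext) (auto simp: insert_index_def)
        ultimately show "sgJ J * dtm (\<lambda>i'. \<phi> (insert_index i i')) (nths cs J) *
         dtm (\<lambda>i'. \<phi> (insert_index i (i' + p))) (nths cs ({..<?r} - J)) =
         sgJ J * dtm \<phi> (nths cs J) *
         dtm (\<lambda>i'. ?\<psi> (insert_index (i - p) i')) (nths cs ({..<?r} - J))" by simp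
      qed
      finally show "t i = (-1)^(i + ?r) * \<phi> i y * (\<Sum>J\<in>Fam ?r p.
         sgJ J * dtm \<phi> (nths cs J) *
         dtm (\<lambda>i'. ?\<psi> (insert_index (i - p) i')) (nths cs ({..<?r} - J)))" unfolding t_def by simp
    qed
    also have "\<dots> = (\<Sum>J\<in>Fam ?r p. sgJ J * dtm \<phi> (nths cs J) *
         (\<Sum>i\<in>{p..<Suc ?r}. (-1)^(i + ?r) * \<phi> i y *
            dtm (\<lambda>i'. ?\<psi> (insert_index (i - p) i')) (nths cs ({..<?r} - J))))"
      apply (simp only: sum_distrib_left)
      apply (subst sum.swap[where A="{p..<Suc ?r}"])
      apply (intro sum.cong refl)
      apply (simp add: mult_ac)
      done
    also have "\<dots> = sum trm (Fam ?r p)"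
    proof (rule sum.cong[OF refl])
      fix J assume J: "J \<in> Fam ?r p"
      then have Jr: "J \<subseteq> {..<?r}" and cJ: "card J = p" unfolding Fam_def by auto
      have fin: "finite J" using Jr finite_subset by blast
      let ?L = "nths cs ({..<?r} - J)"
      have len: "length ?L = ?r - p"
        using length_nths_sub[of "{..<?r} - J" cs] cJ Jr fin by (simp add: card_Diff_subset)
      have "(\<Sum>i\<in>{p..<Suc ?r}. (-1)^(i + ?r) * \<phi> i y * dtm (\<lambda>i'. ?\<psi> (insert_index (i - p) i')) ?L)
          = (\<Sum>i'<Suc (?r - p). (-1)^(i' + (?r - p)) * ?\<psi> i' y * dtm (\<lambda>i''. ?\<psi> (insert_index i' i'')) ?L)"
      proof -
        have "(\<lambda>i'. i' + p) ` {0..<Suc (?r - p)} = {0+p..<Suc (?r - p) + p}"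
          by (rule image_add_atLeastLessThan')
        then have im: "{p..<Suc ?r} = (\<lambda>i'. i' + p) ` {..<Suc (?r - p)}"
          using pr by (simp add: lessThan_atLeast0)
        have sg: "(-1::'a)^(i' + p + ?r) = (-1)^(i' + (?r - p))" for i'
        proof -
          have e: "i' + p + ?r = (i' + (?r - p)) + 2 * p" using pr by simp
          have "(-1::'a)^((i' + (?r - p)) + 2*p) = (-1)^(i' + (?r - p))"
            by (simp only: power_add power_mult) simp
          then show ?thesis by (simp only: e)
        qed
        have "(\<Sum>i\<in>{p..<Suc ?r}. (-1)^(i + ?r) * \<phi> i y * dtm (\<lambda>i'. ?\<psi> (insert_index (i - p) i')) ?L)
          = (\<Sum>i'\<in>{..<Suc (?r - p)}. (-1)^(i' + p + ?r) * \<phi> (i' + p) y * dtm (\<lambda>i''. ?\<psi> (insert_index (i' + p - p) i'')) ?L)"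
          unfolding im by (subst sum.reindex) (auto simp: inj_on_def)
        then show ?thesis unfolding sg by simp
      qed
      also have "\<dots> = dtm ?\<psi> (?L @ [y])" unfolding dtm_snoc len ..
      finally have eq: "(\<Sum>i\<in>{p..<Suc ?r}. (-1)^(i + ?r) * \<phi> i y * dtm (\<lambda>i'. ?\<psi> (insert_index (i - p) i')) ?L)
          = dtm ?\<psi> (?L @ [y])" .
      have d: "{..<Suc ?r} - J = insert ?r ({..<?r} - J)" using Jr by auto
      have "nths (cs @ [y]) ({..<Suc ?r} - J) = ?L @ [y]"
        unfolding d by (rule nths_snoc_in) auto
      then show "sgJ J * dtm \<phi> (nths cs J) *
         (\<Sum>i\<in>{p..<Suc ?r}. (-1)^(i + ?r) * \<phi> i y * dtm (\<lambda>i'. ?\<psi> (insert_index (i - p) i')) ?L)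
         = trm J"
        unfolding eq trm_def nths_snoc_out[OF Jr] by simp
    qed
    finally show ?thesis .
  qed
  show ?case unfolding lhs part1 part2 rhs[symmetric] trm_def by simp
qed



lemma dtm_col_mult:
  fixes \<psi> :: "nat \<Rightarrow> 'c \<Rightarrow> 'a::comm_ring_1"
  shows "dtm (\<lambda>i z. \<psi> i z * h z) cs = (\<Prod>j<length cs. h (cs!j)) * dtm \<psi> cs"
proof -
  let ?n = "length cs"
  have c1: "mat ?n ?n (\<lambda>(i,j). \<psi> i (cs!j) * h (cs!j)) \<in> carrier_mat ?n ?n" by auto
  have c2: "mat ?n ?n (\<lambda>(i,j). \<psi> i (cs!j)) \<in> carrier_mat ?n ?n" by auto
  show ?thesis
    unfolding dtm_def det_def'[OF c1] det_def'[OF c2] sum_distrib_left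
  proof (rule sum.cong[OF refl])
    fix p assume "p \<in> {p. p permutes {0..<?n}}"
    then have p: "p permutes {0..<?n}" by simp
    have "(\<Prod>i = 0..<?n. mat ?n ?n (\<lambda>(i,j). \<psi> i (cs!j) * h (cs!j)) $$ (i, p i))
      = (\<Prod>i = 0..<?n. \<psi> i (cs!p i)) * (\<Prod>i = 0..<?n. h (cs ! p i))"
    proof -
      have pi: "\<And>i. i < ?n \<Longrightarrow> p i < ?n" using permutes_in_image[OF p] by auto
      show ?thesis unfolding prod.distrib[symmetric] by (rule prod.cong) (auto simp: pi)
    qed
    also have "(\<Prod>i = 0..<?n. h (cs ! p i)) = (\<Prod>j<?n. h (cs!j))"
      using prod.permute[OF p, of "\<lambda>j. h (cs!j)"] by (simp add: lessThan_atLeast0 comp_def)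
    also have "(\<Prod>i = 0..<?n. \<psi> i (cs!p i)) = (\<Prod>i = 0..<?n. mat ?n ?n (\<lambda>(i,j). \<psi> i (cs!j)) $$ (i, p i))"
      using p by (auto simp: permutes_in_image intro!: prod.cong)
    finally show "signof p * (\<Prod>i = 0..<?n. mat ?n ?n (\<lambda>(i,j). \<psi> i (cs!j) * h (cs!j)) $$ (i, p i))
      = (\<Prod>j<?n. h (cs!j)) * (signof p * (\<Prod>i = 0..<?n. mat ?n ?n (\<lambda>(i,j). \<psi> i (cs!j)) $$ (i, p i)))"
      by (simp add: mult_ac)
  qed
qed

lemma det_rowop:
  fixes A :: "'a::comm_ring_1 mat"
  assumes A: "A \<in> carrier_mat (Suc r) (Suc r)"
  shows "det (mat (Suc r) (Suc r) (\<lambda>(i,j). if i < r then A$$(i,j) - y * A$$(Suc i,j) else A$$(i,j))) = det A"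
proof -
  let ?n = "Suc r"
  define E where "E = mat ?n ?n (\<lambda>(i,k). (if k = i then 1 else 0) - (if k = Suc i then y else (0::'a)))"
  have E: "E \<in> carrier_mat ?n ?n" unfolding E_def by auto
  have ut: "upper_triangular E" unfolding E_def upper_triangular_def by auto
  have "diag_mat E = map (\<lambda>i. 1) [0..<?n]" unfolding E_def diag_mat_def
    by (intro map_cong) auto
  moreover have "prod_list (map (\<lambda>i. 1::'a) xs) = 1" for xs :: "nat list" by (induct xs) auto
  ultimately have dE: "det E = 1" using det_upper_triangular[OF ut E] by metis
  have "E * A = mat (Suc r) (Suc r) (\<lambda>(i,j). if i < r then A$$(i,j) - y * A$$(Suc i,j) else A$$(i,j))"
  proof (rule eq_matI)
    fix i j assume i: "i < dim_row (mat ?n ?n (\<lambda>(i,j). if i < r then A$$(i,j) - y * A$$(Suc i,j) else A$$(i,j)))"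
      and j: "j < dim_col (mat ?n ?n (\<lambda>(i,j). if i < r then A$$(i,j) - y * A$$(Suc i,j) else A$$(i,j)))"
    have "(E * A) $$ (i,j) = (\<Sum>k = 0..<?n. ((if k = i then 1 else 0) - (if k = Suc i then y else 0)) * A $$ (k, j))"
      using i j A unfolding E_def by (simp add: scalar_prod_def)
    also have "\<dots> = (\<Sum>k = 0..<?n. (if k = i then A $$ (k, j) else 0)) - (\<Sum>k = 0..<?n. (if k = Suc i then y * A $$ (k, j) else 0))"
      unfolding sum_subtractf[symmetric] by (rule sum.cong) auto
    also have "\<dots> = (if i < r then A$$(i,j) - y * A$$(Suc i,j) else A$$(i,j))"
      using i by (auto simp: sum.delta less_Suc_eq)
    finally show "(E * A) $$ (i,j) = mat ?n ?n (\<lambda>(i,j). if i < r then A$$(i,j) - y * A$$(Suc i,j) else A$$(i,j)) $$ (i,j)"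
      using i j by simp
  qed (use E A in auto)
  then show ?thesis using det_mult[OF E A] dE by simp
qed

lemma vandermonde:
  fixes xs :: "'a::comm_ring_1 list"
  shows "dtm (\<lambda>i z. z ^ (length xs - Suc i)) xs = (\<Prod>i<length xs. \<Prod>j\<in>{i<..<length xs}. (xs!i - xs!j))"
proof (induct xs rule: rev_induct)
  case Nil
  then show ?case by simp
next
  case (snoc y xs)
  let ?r = "length xs"
  let ?ys = "xs @ [y]"
  define \<psi> where "\<psi> i z = (if i < ?r then z ^ (?r - Suc i) * (z - y) else 1)" for i z
  have V: "mat (Suc ?r) (Suc ?r) (\<lambda>(i,j). (?ys!j) ^ (?r - i)) \<in> carrier_mat (Suc ?r) (Suc ?r)" by auto
  have "dtm (\<lambda>i z. z ^ (length ?ys - Suc i)) ?ys = det (mat (Suc ?r) (Suc ?r) (\<lambda>(i,j). (?ys!j) ^ (?r - i)))"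
    unfolding dtm_def by simp
  also have "\<dots> = det (mat (Suc ?r) (Suc ?r) (\<lambda>(i,j). \<psi> i (?ys!j)))"
  proof -
    have "mat (Suc ?r) (Suc ?r) (\<lambda>(i,j). \<psi> i (?ys!j)) =
      mat (Suc ?r) (Suc ?r) (\<lambda>(i,j). if i < ?r then mat (Suc ?r) (Suc ?r) (\<lambda>(i,j). (?ys!j) ^ (?r - i)) $$ (i,j)
         - y * mat (Suc ?r) (Suc ?r) (\<lambda>(i,j). (?ys!j) ^ (?r - i)) $$ (Suc i,j)
         else mat (Suc ?r) (Suc ?r) (\<lambda>(i,j). (?ys!j) ^ (?r - i)) $$ (i,j))"
    proof -
      have pw: "\<And>z i. i < ?r \<Longrightarrow> (z::'a)^(?r - i) = z * z^(?r - Suc i)"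
        by (metis Suc_diff_Suc power_Suc)
      show ?thesis by (rule eq_matI) (auto simp: \<psi>_def pw algebra_simps)
    qed
    then show ?thesis using det_rowop[OF V, of y] by simp
  qed
  also have "\<dots> = dtm \<psi> ?ys" unfolding dtm_def by simp
  also have "\<dots> = (\<Sum>i<Suc ?r. (-1)^(i + ?r) * \<psi> i y * dtm (\<lambda>i'. \<psi> (insert_index i i')) xs)"
    by (rule dtm_snoc)
  also have "\<dots> = dtm (\<lambda>i'. \<psi> (insert_index ?r i')) xs"
    by (simp add: \<psi>_def power_add[symmetric] mult_2[symmetric])
  also have "\<dots> = dtm (\<lambda>i z. z ^ (?r - Suc i) * (z - y)) xs"
    by (rule dtm_cong) (auto simp: \<psi>_def insert_index_def)
  also have "\<dots> = (\<Prod>j<?r. (xs!j - y)) * (\<Prod>i<?r. \<Prod>j\<in>{i<..<?r}. (xs!i - xs!j))"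
    unfolding dtm_col_mult snoc ..
  also have "\<dots> = (\<Prod>i<length ?ys. \<Prod>j\<in>{i<..<length ?ys}. (?ys!i - ?ys!j))"
  proof -
    have "(\<Prod>i<length ?ys. \<Prod>j\<in>{i<..<length ?ys}. (?ys!i - ?ys!j)) = (\<Prod>i<?r. \<Prod>j\<in>{i<..<Suc ?r}. (?ys!i - ?ys!j))"
    proof -
      have "{?r<..<Suc ?r} = {}" by auto
      then show ?thesis by simp
    qed
    also have "\<dots> = (\<Prod>i<?r. (xs!i - y) * (\<Prod>j\<in>{i<..<?r}. (xs!i - xs!j)))"
    proof (rule prod.cong[OF refl])
      fix i assume i: "i \<in> {..<?r}"
      have "{i<..<Suc ?r} = insert ?r {i<..<?r}" using i by auto
      then show "(\<Prod>j\<in>{i<..<Suc ?r}. (?ys!i - ?ys!j)) = (xs!i - y) * (\<Prod>j\<in>{i<..<?r}. (xs!i - xs!j))"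
        using i by (simp add: nth_append)
    qed
    finally show ?thesis by (simp add: prod.distrib)
  qed
  finally show ?case .
qed



definition VP :: "'a::comm_ring_1 list \<Rightarrow> 'a" where
  "VP ys = (\<Prod>i<length ys. \<Prod>j\<in>{i<..<length ys}. (ys!i - ys!j))"

definition lp :: "('c \<Rightarrow> 'a::comm_monoid_mult) \<Rightarrow> 'c list \<Rightarrow> 'a" where
  "lp f ys = (\<Prod>i<length ys. f (ys!i))"

lemma lp_Nil[simp]: "lp f [] = 1" by (simp add: lp_def)

lemma lp_snoc: "lp f (ys @ [y]) = lp f ys * f y"
  unfolding lp_def by (simp add: nth_append)

lemma VP_Nil[simp]: "VP [] = 1" by (simp add: VP_def)

lemma VP_snoc: "VP (ys @ [y]) = VP ys * lp (\<lambda>z. z - y) ys"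
proof -
  let ?r = "length ys"
  have "VP (ys @ [y]) = (\<Prod>i<?r. \<Prod>j\<in>{i<..<Suc ?r}. ((ys @ [y])!i - (ys @ [y])!j))"
  proof -
    have "{?r<..<Suc ?r} = {}" by auto
    then show ?thesis unfolding VP_def by simp
  qed
  also have "\<dots> = (\<Prod>i<?r. (ys!i - y) * (\<Prod>j\<in>{i<..<?r}. (ys!i - ys!j)))"
  proof (rule prod.cong[OF refl])
    fix i assume i: "i \<in> {..<?r}"
    have "{i<..<Suc ?r} = insert ?r {i<..<?r}" using i by auto
    then show "(\<Prod>j\<in>{i<..<Suc ?r}. ((ys @ [y])!i - (ys @ [y])!j)) = (ys!i - y) * (\<Prod>j\<in>{i<..<?r}. (ys!i - ys!j))"
      using i by (simp add: nth_append)
  qed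
  finally show ?thesis unfolding VP_def lp_def by (simp add: prod.distrib mult.commute)
qed

lemma vandermonde_VP: "dtm (\<lambda>i z. z ^ (length xs - Suc i)) xs = VP xs"
  unfolding VP_def by (rule vandermonde)

lemma lp_nths: "lp f (nths xs J) = (\<Prod>c\<in>J \<inter> {..<length xs}. f (xs!c))"
proof (induct xs arbitrary: J rule: rev_induct)
  case Nil
  then show ?case by simp
next
  case (snoc y xs)
  let ?r = "length xs"
  have e: "nths (xs @ [y]) J = nths xs J @ nths [y] {j. j + ?r \<in> J}" by (simp add: nths_append)
  have "nths xs J = nths xs (J \<inter> {..<?r})" by (rule nths_cong) auto
  show ?case
  proof (cases "?r \<in> J")
    case True
    have "J \<inter> {..<length (xs @ [y])} = insert ?r (J \<inter> {..<?r})" using True by auto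
    moreover have "nths [y] {j. j + ?r \<in> J} = [y]" using True by (simp add: nths_singleton)
    ultimately have "lp f (nths (xs @ [y]) J) = lp f (nths xs J) * f y" unfolding e by (simp add: lp_snoc)
    moreover have "(\<Prod>c\<in>J \<inter> {..<length (xs @ [y])}. f ((xs @ [y])!c)) = f y * (\<Prod>c\<in>J \<inter> {..<?r}. f (xs!c))"
    proof -
      have "(\<Prod>c\<in>J \<inter> {..<?r}. f ((xs @ [y])!c)) = (\<Prod>c\<in>J \<inter> {..<?r}. f (xs!c))"
        by (rule prod.cong) (auto simp: nth_append)
      then show ?thesis unfolding \<open>J \<inter> {..<length (xs @ [y])} = _\<close> by simp
    qed
    ultimately show ?thesis unfolding snoc by (simp add: mult.commute)
  next
    case False
    have "J \<inter> {..<length (xs @ [y])} = J \<inter> {..<?r}" using False by (auto simp: less_Suc_eq)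
    moreover have "nths [y] {j. j + ?r \<in> J} = []" using False by (simp add: nths_singleton)
    moreover have "(\<Prod>c\<in>J \<inter> {..<?r}. f ((xs @ [y])!c)) = (\<Prod>c\<in>J \<inter> {..<?r}. f (xs!c))"
      by (rule prod.cong) (auto simp: nth_append)
    ultimately show ?thesis unfolding e by (simp del: nth_append add: snoc.hyps)
  qed
qed

lemma VP_split:
  fixes xs :: "'a::comm_ring_1 list"
  assumes "J \<subseteq> {..<length xs}"
  shows "sgJ J * VP (nths xs J) * VP (nths xs ({..<length xs} - J)) *
    (\<Prod>c\<in>J. \<Prod>a\<in>{..<length xs} - J. (xs!c - xs!a)) = VP xs"
  using assms
proof (induct xs arbitrary: J rule: rev_induct)
  case Nil
  then show ?case by (simp add: sgJ_def)
next
  case (snoc y xs)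
  let ?r = "length xs"
  let ?ys = "xs @ [y]"
  have nth_ys: "c < ?r \<Longrightarrow> ?ys ! c = xs ! c" for c by (simp add: nth_append)
  have all: "lp (\<lambda>z. z - y) xs = (\<Prod>c\<in>{..<?r}. (xs!c - y))" unfolding lp_def ..
  show ?case
  proof (cases "?r \<in> J")
    case True
    define J' where "J' = J - {?r}"
    have J': "J' \<subseteq> {..<?r}" "J = insert ?r J'" "?r \<notin> J'" using snoc.prems True unfolding J'_def
      by (auto simp: less_Suc_eq)
    have fin: "finite J'" using J'(1) finite_subset by blast
    have c1: "{..<length ?ys} - J = {..<?r} - J'" using J' by auto
    have n1: "nths ?ys J = nths xs J' @ [y]" unfolding J'(2) by (rule nths_snoc_in[OF J'(1)])
    have n2: "nths ?ys ({..<?r} - J') = nths xs ({..<?r} - J')" by (rule nths_snoc_out) auto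
    have lp1: "lp (\<lambda>z. z - y) (nths xs J') = (\<Prod>c\<in>J'. (xs!c - y))"
      unfolding lp_nths using J'(1) by (intro prod.cong) auto
    have cross: "(\<Prod>c\<in>J. \<Prod>a\<in>{..<?r} - J'. (?ys!c - ?ys!a)) =
        (\<Prod>a\<in>{..<?r} - J'. (y - xs!a)) * (\<Prod>c\<in>J'. \<Prod>a\<in>{..<?r} - J'. (xs!c - xs!a))"
    proof -
      have "(\<Prod>c\<in>J. \<Prod>a\<in>{..<?r} - J'. (?ys!c - ?ys!a)) =
          (\<Prod>a\<in>{..<?r} - J'. (?ys!?r - ?ys!a)) * (\<Prod>c\<in>J'. \<Prod>a\<in>{..<?r} - J'. (?ys!c - ?ys!a))"
        unfolding J'(2) using fin J'(3) by simp
      also have "\<dots> = (\<Prod>a\<in>{..<?r} - J'. (y - xs!a)) * (\<Prod>c\<in>J'. \<Prod>a\<in>{..<?r} - J'. (xs!c - xs!a))"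
        using J'(1) by (intro arg_cong2[of _ _ _ _ "(*)"] prod.cong refl) (auto simp: nth_append)
      finally show ?thesis .
    qed
    have sg: "sgJ J = (-1)^(?r - card J') * (sgJ J' :: 'a)" unfolding J'(2) by (rule sgJ_insert[OF J'(1) fin])
    have cardc: "card ({..<?r} - J') = ?r - card J'" using J'(1) fin by (simp add: card_Diff_subset)
    have flip: "(-1)^(?r - card J') * (\<Prod>a\<in>{..<?r} - J'. (y - xs!a)) = (\<Prod>a\<in>{..<?r} - J'. (xs!a - y))"
    proof -
      have "(\<Prod>a\<in>{..<?r} - J'. (xs!a - y)) = (\<Prod>a\<in>{..<?r} - J'. (-1) * (y - xs!a))" by simp
      also have "\<dots> = (-1)^(card ({..<?r} - J')) * (\<Prod>a\<in>{..<?r} - J'. (y - xs!a))"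
        by (simp only: prod.distrib prod_constant)
      finally show ?thesis unfolding cardc by simp
    qed
    have split: "(\<Prod>c\<in>{..<?r}. (xs!c - y)) = (\<Prod>c\<in>J'. (xs!c - y)) * (\<Prod>a\<in>{..<?r} - J'. (xs!a - y))"
      using prod.subset_diff[of J' "{..<?r}" "\<lambda>c. xs!c - y"] J'(1) by (simp add: mult.commute)
    have IH: "sgJ J' * VP (nths xs J') * VP (nths xs ({..<?r} - J')) *
      (\<Prod>c\<in>J'. \<Prod>a\<in>{..<?r} - J'. (xs!c - xs!a)) = VP xs" by (rule snoc.hyps[OF J'(1)])
    show ?thesis
      unfolding cross n1 c1 n2 sg VP_snoc lp1 all split flip[symmetric] IH[symmetric]
      by (simp add: mult_ac)
  next
    case False
    have J: "J \<subseteq> {..<?r}" using snoc.prems False by (auto simp: less_Suc_eq)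
    have fin: "finite J" using J finite_subset by blast
    have c1: "{..<length ?ys} - J = insert ?r ({..<?r} - J)" using J by auto
    have n1: "nths ?ys J = nths xs J" by (rule nths_snoc_out[OF J])
    have n2: "nths ?ys (insert ?r ({..<?r} - J)) = nths xs ({..<?r} - J) @ [y]" by (rule nths_snoc_in) auto
    have lp1: "lp (\<lambda>z. z - y) (nths xs ({..<?r} - J)) = (\<Prod>a\<in>{..<?r} - J. (xs!a - y))"
      unfolding lp_nths by (intro prod.cong) auto
    have cross: "(\<Prod>c\<in>J. \<Prod>a\<in>insert ?r ({..<?r} - J). (?ys!c - ?ys!a)) =
        (\<Prod>c\<in>J. (xs!c - y)) * (\<Prod>c\<in>J. \<Prod>a\<in>{..<?r} - J. (xs!c - xs!a))"
    proof -
      have "(\<Prod>c\<in>J. \<Prod>a\<in>insert ?r ({..<?r} - J). (?ys!c - ?ys!a)) =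
         (\<Prod>c\<in>J. (xs!c - y) * (\<Prod>a\<in>{..<?r} - J. (xs!c - xs!a)))"
      proof (rule prod.cong[OF refl])
        fix c assume c: "c \<in> J"
        then have "c < ?r" using J by auto
        then show "(\<Prod>a\<in>insert ?r ({..<?r} - J). (?ys!c - ?ys!a)) = (xs!c - y) * (\<Prod>a\<in>{..<?r} - J. (xs!c - xs!a))"
          by (simp add: nth_ys)
      qed
      then show ?thesis by (simp add: prod.distrib)
    qed
    have split: "(\<Prod>c\<in>{..<?r}. (xs!c - y)) = (\<Prod>c\<in>J. (xs!c - y)) * (\<Prod>a\<in>{..<?r} - J. (xs!a - y))"
      using prod.subset_diff[of J "{..<?r}" "\<lambda>c. xs!c - y"] J by (simp add: mult.commute)
    have IH: "sgJ J * VP (nths xs J) * VP (nths xs ({..<?r} - J)) *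
      (\<Prod>c\<in>J. \<Prod>a\<in>{..<?r} - J. (xs!c - xs!a)) = VP xs" by (rule snoc.hyps[OF J])
    show ?thesis
      unfolding cross n1 c1 n2 VP_snoc lp1 all split IH[symmetric]
      by (simp add: mult_ac)
  qed
qed

lemma dtm_col_mult_lp: "dtm (\<lambda>i z. \<psi> i z * h z) cs = lp h cs * dtm \<psi> cs"
  unfolding lp_def by (rule dtm_col_mult)

lemma aux_field: "s * a * b = v / c \<Longrightarrow> s * (G * a) * b = (v::'a::field) * (G / c)"
proof -
  assume h: "s * a * b = v / c"
  have "s * (G * a) * b = G * (s * a * b)" by (simp add: mult_ac)
  then show ?thesis using h by simp
qed

lemma GU_formula_idx:
  fixes xs :: "'a::field list" and g :: "'a \<Rightarrow> 'a"
  assumes dist: "distinct xs" and p: "p \<le> length xs"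
  shows "dtm (\<lambda>r a. if r < p then a^(p - Suc r) * g a else a^(length xs - Suc r)) xs
    = VP xs * (\<Sum>J\<in>Fam (length xs) p. (\<Prod>c\<in>J. g (xs!c)) / (\<Prod>c\<in>J. \<Prod>a\<in>{..<length xs} - J. (xs!c - xs!a)))"
proof -
  let ?M = "length xs"
  let ?\<phi> = "\<lambda>r a. if r < p then a^(p - Suc r) * g a else a^(length xs - Suc r)"
  have "dtm ?\<phi> xs = (\<Sum>J\<in>Fam ?M p. sgJ J * dtm ?\<phi> (nths xs J) * dtm (\<lambda>i. ?\<phi> (i + p)) (nths xs ({..<?M} - J)))"
    by (rule gen_laplace[OF p])
  also have "\<dots> = (\<Sum>J\<in>Fam ?M p. VP xs * ((\<Prod>c\<in>J. g (xs!c)) / (\<Prod>c\<in>J. \<Prod>a\<in>{..<?M} - J. (xs!c - xs!a))))"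
  proof (rule sum.cong[OF refl])
    fix J assume J: "J \<in> Fam ?M p"
    then have JM: "J \<subseteq> {..<?M}" and cJ: "card J = p" unfolding Fam_def by auto
    have fin: "finite J" using JM finite_subset by blast
    have l1: "length (nths xs J) = p" using length_nths_sub[OF JM] cJ by simp
    have l2: "length (nths xs ({..<?M} - J)) = ?M - p"
      using length_nths_sub[of "{..<?M} - J" xs] cJ JM fin by (simp add: card_Diff_subset)
    have d1: "dtm ?\<phi> (nths xs J) = (\<Prod>c\<in>J. g (xs!c)) * VP (nths xs J)"
    proof -
      have "dtm ?\<phi> (nths xs J) = dtm (\<lambda>i z. z ^ (length (nths xs J) - Suc i) * g z) (nths xs J)"
        by (rule dtm_cong) (simp add: l1)
      also have "\<dots> = lp g (nths xs J) * VP (nths xs J)"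
        unfolding dtm_col_mult_lp vandermonde_VP ..
      also have "lp g (nths xs J) = (\<Prod>c\<in>J. g (xs!c))"
        unfolding lp_nths using JM by (intro prod.cong) auto
      finally show ?thesis .
    qed
    have d2: "dtm (\<lambda>i. ?\<phi> (i + p)) (nths xs ({..<?M} - J)) = VP (nths xs ({..<?M} - J))"
    proof -
      have "dtm (\<lambda>i. ?\<phi> (i + p)) (nths xs ({..<?M} - J)) =
          dtm (\<lambda>i z. z ^ (length (nths xs ({..<?M} - J)) - Suc i)) (nths xs ({..<?M} - J))"
        by (rule dtm_cong) (simp add: l2 ac_simps)
      then show ?thesis unfolding vandermonde_VP .
    qed
    have cross: "(\<Prod>c\<in>J. \<Prod>a\<in>{..<?M} - J. (xs!c - xs!a)) \<noteq> 0"
    proof -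
      have "xs!c - xs!a \<noteq> 0" if "c \<in> J" "a \<in> {..<?M} - J" for c a
      proof -
        have "c < ?M" "a < ?M" "c \<noteq> a" using that JM by auto
        then show ?thesis using dist by (simp add: nth_eq_iff_index_eq)
      qed
      then show ?thesis using fin by (simp add: prod_zero_iff)
    qed
    have sg: "sgJ J * sgJ J = (1::'a)" unfolding sgJ_def by (simp add: power_mult_distrib[symmetric])
    have split: "sgJ J * VP (nths xs J) * VP (nths xs ({..<?M} - J)) *
      (\<Prod>c\<in>J. \<Prod>a\<in>{..<?M} - J. (xs!c - xs!a)) = VP xs" by (rule VP_split[OF JM])
    have "sgJ J * VP (nths xs J) * VP (nths xs ({..<?M} - J)) = VP xs / (\<Prod>c\<in>J. \<Prod>a\<in>{..<?M} - J. (xs!c - xs!a))"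
      using split cross by (simp add: eq_divide_eq)
    then show "sgJ J * dtm ?\<phi> (nths xs J) * dtm (\<lambda>i. ?\<phi> (i + p)) (nths xs ({..<?M} - J)) =
      VP xs * ((\<Prod>c\<in>J. g (xs!c)) / (\<Prod>c\<in>J. \<Prod>a\<in>{..<?M} - J. (xs!c - xs!a)))"
      unfolding d1 d2 by (rule aux_field)
  qed
  finally show ?thesis by (simp add: sum_distrib_left)
qed

lemma GU_formula:
  fixes xs :: "'a::field list" and g :: "'a \<Rightarrow> 'a"
  assumes dist: "distinct xs" and p: "p \<le> length xs"
  shows "dtm (\<lambda>r a. if r < p then a^(p - Suc r) * g a else a^(length xs - Suc r)) xs
    = VP xs * (\<Sum>P\<in>{P. P \<subseteq> set xs \<and> card P = p}. (\<Prod>a\<in>P. g a) / Res P (set xs - P))"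
proof -
  let ?M = "length xs"
  have inj: "inj_on (nth xs) {..<?M}" using dist by (simp add: inj_on_def nth_eq_iff_index_eq)
  have setxs: "set xs = nth xs ` {..<?M}" by (force simp: set_conv_nth)
  have "(\<Sum>J\<in>Fam ?M p. (\<Prod>c\<in>J. g (xs!c)) / (\<Prod>c\<in>J. \<Prod>a\<in>{..<?M} - J. (xs!c - xs!a)))
      = (\<Sum>J\<in>Fam ?M p. (\<lambda>P. (\<Prod>a\<in>P. g a) / Res P (set xs - P)) (nth xs ` J))"
  proof (rule sum.cong[OF refl])
    fix J assume J: "J \<in> Fam ?M p"
    then have JM: "J \<subseteq> {..<?M}" unfolding Fam_def by auto
    have injJ: "inj_on (nth xs) J" by (rule inj_on_subset[OF inj JM])
    have injJc: "inj_on (nth xs) ({..<?M} - J)" by (rule inj_on_subset[OF inj]) auto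
    have im: "set xs - nth xs ` J = nth xs ` ({..<?M} - J)"
      unfolding setxs by (rule inj_on_image_set_diff[OF inj, symmetric]) (use JM in auto)
    have "(\<Prod>a\<in>nth xs ` J. g a) = (\<Prod>c\<in>J. g (xs!c))" using prod.reindex[OF injJ] by simp
    moreover have "Res (nth xs ` J) (set xs - nth xs ` J) = (\<Prod>c\<in>J. \<Prod>a\<in>{..<?M} - J. (xs!c - xs!a))"
      unfolding Res_def im prod.reindex[OF injJ] prod.reindex[OF injJc] by simp
    ultimately show "(\<Prod>c\<in>J. g (xs!c)) / (\<Prod>c\<in>J. \<Prod>a\<in>{..<?M} - J. (xs!c - xs!a)) =
      (\<lambda>P. (\<Prod>a\<in>P. g a) / Res P (set xs - P)) (nth xs ` J)" by simp
  qed
  also have "\<dots> = (\<Sum>P\<in>image (image (nth xs)) (Fam ?M p). (\<Prod>a\<in>P. g a) / Res P (set xs - P))"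
  proof (rule sum.reindex[symmetric, unfolded comp_def])
    show "inj_on (image (nth xs)) (Fam ?M p)"
    proof (rule inj_onI)
      fix J1 J2 assume "J1 \<in> Fam ?M p" "J2 \<in> Fam ?M p" and e: "nth xs ` J1 = nth xs ` J2"
      then have "J1 \<subseteq> {..<?M}" "J2 \<subseteq> {..<?M}" unfolding Fam_def by auto
      then show "J1 = J2" using inj_on_image_eq_iff[OF inj] e by blast
    qed
  qed
  also have "image (image (nth xs)) (Fam ?M p) = {P. P \<subseteq> set xs \<and> card P = p}"
  proof (intro equalityI subsetI)
    fix P assume "P \<in> image (image (nth xs)) (Fam ?M p)"
    then obtain J where J: "J \<subseteq> {..<?M}" "card J = p" "P = nth xs ` J" unfolding Fam_def by auto
    have "card P = p" using J card_image[OF inj_on_subset[OF inj J(1)]] by simp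
    moreover have "P \<subseteq> set xs" using J unfolding setxs by auto
    ultimately show "P \<in> {P. P \<subseteq> set xs \<and> card P = p}" by simp
  next
    fix P assume "P \<in> {P. P \<subseteq> set xs \<and> card P = p}"
    then have P: "P \<subseteq> set xs" "card P = p" by auto
    define J where "J = {i. i < ?M \<and> xs!i \<in> P}"
    have JM: "J \<subseteq> {..<?M}" unfolding J_def by auto
    have PJ: "P = nth xs ` J" using P(1) unfolding J_def setxs by auto
    have "card J = p" using P(2) PJ card_image[OF inj_on_subset[OF inj JM]] by simp
    then show "P \<in> image (image (nth xs)) (Fam ?M p)" using JM PJ unfolding Fam_def by auto
  qed
  finally show ?thesis unfolding GU_formula_idx[OF dist p] by simp
qed



definition Smat :: "nat \<Rightarrow> nat \<Rightarrow> nat \<Rightarrow> 'a::comm_ring_1 poly \<Rightarrow> 'a poly \<Rightarrow> 'a \<Rightarrow> 'a mat" where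
  "Smat m n k f g x = (let N = m + n - 2 * k in
     mat N N (\<lambda>(i, c).
       let isf = (i < n - k);
           j = (if isf then n - k - 1 - i else m - k - 1 - (i - (n - k)));
           p = (if isf then f else g)
       in if c < N - 1 then (if j \<le> m + n - k - 1 - c then coeff p (m + n - k - 1 - c - j) else 0)
          else (if isf then x ^ j else 0)))"

locale SR =
  fixes m n k :: nat and f g :: "'a::field poly" and x :: 'a and as :: "'a list"
  assumes km: "k + 1 \<le> m" and kn: "k + 1 \<le> n"
    and degf: "degree f = m" and monf: "coeff f m = 1"
    and degg: "degree g = n"
    and roots: "\<And>a. a \<in> set as \<Longrightarrow> poly f a = 0"
    and dist: "distinct (x # as)" and len: "length as = m"
begin

definition "N = m + n - 2 * k"
definition "D = m + n - k"
definition "xs = x # as"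
definition "rp i = (if i < n - k then monom 1 (n - k - 1 - i) * f
   else if i < N then monom 1 (m - k - 1 - (i - (n - k))) * g else monom 1 (D - i))"
definition "sp i = (if i < n - k then x ^ (n - k - 1 - i) else 0)"
definition "dg c = (if c < n - k - 1 then D - 1 - c else D - c)"
definition "S' = mat N N (\<lambda>(i,c). if c = n - k - 1 then sp i else coeff (rp i) (dg c))"
definition "T = mat (Suc D) (Suc D) (\<lambda>(i,c). if c = n - k - 1 then sp i else coeff (rp i) (dg c))"

lemma ND: "N = (n - k - 1) + (m - k) + 1" "D = N + k" "Suc D = N + (k + 1)"
  unfolding N_def D_def using km kn by auto

lemma Smat_entry: assumes i: "i < N" and c: "c < N"
  shows "Smat m n k f g x $$ (i,c) = (if c < N - 1 then coeff (rp i) (D - 1 - c) else sp i)"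
proof -
  have "Smat m n k f g x $$ (i,c) = (let isf = (i < n - k);
           j = (if isf then n - k - 1 - i else m - k - 1 - (i - (n - k)));
           p = (if isf then f else g)
       in if c < N - 1 then (if j \<le> m + n - k - 1 - c then coeff p (m + n - k - 1 - c - j) else 0)
          else (if isf then x ^ j else 0))"
    unfolding Smat_def N_def[symmetric] Let_def[of N] using i c by simp
  also have "\<dots> = (if c < N - 1 then coeff (rp i) (D - 1 - c) else sp i)"
  proof (cases "i < n - k")
    case True
    then show ?thesis unfolding rp_def sp_def D_def Let_def by (simp add: coeff_monom_mult not_less)
  next
    case False
    then show ?thesis using i unfolding rp_def sp_def D_def Let_def by (simp add: coeff_monom_mult not_less)
  qed
  finally show ?thesis .
qed

lemma det_Smat: "det (Smat m n k f g x) = (-1)^(m - k) * det S'"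
proof -
  have C: "Smat m n k f g x \<in> carrier_mat N N" unfolding Smat_def N_def by (simp add: Let_def)
  let ?cm = "\<lambda>j. if j < n - k - 1 then j else if j < n - k - 1 + 1 then j + (m - k) else j - 1"
  have "det (Smat m n k f g x) = (-1)^((m - k) * 1) * det (mat N N (\<lambda>(i, j). Smat m n k f g x $$ (i, ?cm j)))"
    by (rule det_swap_final_cols[OF C ND(1)])
  also have "mat N N (\<lambda>(i, j). Smat m n k f g x $$ (i, ?cm j)) = S'"
  proof (rule eq_matI)
    fix i c assume i: "i < dim_row S'" and c: "c < dim_col S'"
    then have i: "i < N" and c: "c < N" unfolding S'_def by auto
    have cm: "?cm c < N" using c ND by auto
    have "Smat m n k f g x $$ (i, ?cm c) = S' $$ (i, c)"
    proof (cases "c < n - k - 1")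
      case True
      then have "c < N - 1" using ND by simp
      then show ?thesis using True i c unfolding Smat_entry[OF i cm] S'_def dg_def by simp
    next
      case False
      show ?thesis
      proof (cases "c = n - k - 1")
        case True
        then have "?cm c = N - 1" using ND by simp
        then show ?thesis using True i c unfolding Smat_entry[OF i cm] S'_def by simp
      next
        case False2: False
        have c1: "c \<ge> 1" using False False2 by arith
        have cc: "?cm c = c - 1" using False False2 by auto
        have cc2: "c - 1 < N - 1" "D - 1 - (c - 1) = D - c" using c c1 by arith+
        show ?thesis using False False2 i c unfolding cc
          using Smat_entry[OF i, of "c - 1"] cc2 c unfolding S'_def dg_def by simp
      qed
    qed
    then show "mat N N (\<lambda>(i, j). Smat m n k f g x $$ (i, ?cm j)) $$ (i, c) = S' $$ (i, c)"
      using i c by simp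
  qed (auto simp: S'_def)
  finally show ?thesis by simp
qed


lemma rp_low: "i \<ge> N \<Longrightarrow> rp i = monom 1 (D - i)"
  unfolding rp_def using ND by auto

lemma sp_low: "i \<ge> n - k \<Longrightarrow> sp i = 0"
  unfolding sp_def by auto

lemma dg_ge: "c < N \<Longrightarrow> c \<noteq> n - k - 1 \<Longrightarrow> dg c \<ge> k + 1"
  unfolding dg_def using ND km kn by auto

lemma dg_hi: "c \<ge> n - k \<Longrightarrow> dg c = D - c"
  unfolding dg_def by auto

lemma det_T: "det T = det S'"
proof -
  define Lo where "Lo = mat N (k + 1) (\<lambda>(i,c). T $$ (i, N + c))"
  have S'c: "S' \<in> carrier_mat N N" unfolding S'_def by auto
  have eq: "T = four_block_mat S' Lo (0\<^sub>m (k + 1) N) (1\<^sub>m (k + 1))"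
  proof (rule eq_matI)
    fix i c assume i: "i < dim_row (four_block_mat S' Lo (0\<^sub>m (k + 1) N) (1\<^sub>m (k + 1)))"
      and c: "c < dim_col (four_block_mat S' Lo (0\<^sub>m (k + 1) N) (1\<^sub>m (k + 1)))"
    then have i': "i < N + (k + 1)" and c': "c < N + (k + 1)" using S'c by auto
    then have iD: "i < Suc D" and cD: "c < Suc D" using ND by auto
    show "T $$ (i, c) = four_block_mat S' Lo (0\<^sub>m (k + 1) N) (1\<^sub>m (k + 1)) $$ (i, c)"
    proof (cases "i < N")
      case True
      then show ?thesis using i' c' iD cD S'c unfolding T_def S'_def Lo_def by auto
    next
      case iN: False
      have sp0: "sp i = 0" using iN ND by (intro sp_low) auto
      have rp: "rp i = monom 1 (D - i)" using iN by (intro rp_low) auto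
      show ?thesis
      proof (cases "c < N")
        case True
        have "T $$ (i, c) = 0"
        proof (cases "c = n - k - 1")
          case True
          then show ?thesis using iD cD sp0 unfolding T_def by simp
        next
          case False
          have "dg c \<ge> k + 1" using dg_ge[OF \<open>c < N\<close> False] .
          moreover have "D - i \<le> k" using iN ND by auto
          ultimately have "D - i \<noteq> dg c" by auto
          then show ?thesis using iD cD False unfolding T_def by (simp add: rp coeff_monom)
        qed
        then show ?thesis using i' c' S'c iN True by simp
      next
        case cN: False
        have cne: "c \<noteq> n - k - 1" using cN ND by auto
        have dgc: "dg c = D - c" using cN ND by (intro dg_hi) auto
        have "T $$ (i, c) = (if D - i = D - c then 1 else 0)"
          using iD cD cne unfolding T_def by (simp add: rp dgc coeff_monom)
        also have "\<dots> = (if i = c then 1 else 0)" using iD cD by auto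
        moreover have "(i - N = c - N) = (i = c)" using iN cN by auto
        ultimately show ?thesis using i' c' S'c iN cN by simp
      qed
    qed
  qed (use ND S'c in \<open>auto simp: T_def\<close>)
  have "det T = det S' * det (1\<^sub>m (k + 1) :: 'a mat)"
    unfolding eq by (rule det_four_block_mat_lower_left_zero[OF S'c]) (auto simp: Lo_def)
  then show ?thesis by simp
qed


definition "W = mat (Suc D) (Suc D) (\<lambda>(c,s). if s < n - k then (if c = s then 1 else 0)
   else if c = n - k - 1 then (if s = n - k then - poly f x else 0) else (xs ! (s - (n - k))) ^ (dg c))"

lemma len_xs: "length xs = m + 1" unfolding xs_def using len by simp

lemma det_W: "det W = VP xs"
proof -
  define Z where "Z = mat (n - k) (m + 1) (\<lambda>(c,t). W $$ (c, n - k + t))"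
  define V where "V = mat (m + 1) (m + 1) (\<lambda>(r,t). (xs ! t) ^ (m - r))"
  have DD: "Suc D = (n - k) + (m + 1)" using ND km kn unfolding D_def by auto
  have I: "(1\<^sub>m (n - k) :: 'a mat) \<in> carrier_mat (n - k) (n - k)" by auto
  have eq: "W = four_block_mat (1\<^sub>m (n - k)) Z (0\<^sub>m (m + 1) (n - k)) V"
  proof (rule eq_matI)
    fix c s assume c: "c < dim_row (four_block_mat (1\<^sub>m (n - k)) Z (0\<^sub>m (m + 1) (n - k)) V)"
      and s: "s < dim_col (four_block_mat (1\<^sub>m (n - k)) Z (0\<^sub>m (m + 1) (n - k)) V)"
    then have c': "c < (n - k) + (m + 1)" and s': "s < (n - k) + (m + 1)" unfolding V_def by auto
    then have cD: "c < Suc D" and sD: "s < Suc D" using DD by auto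
    show "W $$ (c, s) = four_block_mat (1\<^sub>m (n - k)) Z (0\<^sub>m (m + 1) (n - k)) V $$ (c, s)"
    proof (cases "c < n - k")
      case True
      show ?thesis
      proof (cases "s < n - k")
        case True
        moreover have "dim_row V = m + 1" "dim_col V = m + 1" unfolding V_def by auto
        ultimately show ?thesis using \<open>c < n - k\<close> c' s' cD sD unfolding W_def by simp
      next
        case False
        have e: "n - k + (s - (n - k)) = s" using False by simp
        have "Z $$ (c, s - (n - k)) = W $$ (c, s)" unfolding Z_def using \<open>c < n - k\<close> s' e by simp
        moreover have "dim_row V = m + 1" "dim_col V = m + 1" unfolding V_def by auto
        ultimately show ?thesis using \<open>c < n - k\<close> c' s' False by simp
      qed
    next
      case cF: False
      have cne: "c \<noteq> n - k - 1" using cF kn by arith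
      have dgc: "dg c = m - (c - (n - k))" using cF dg_hi[of c] kn unfolding D_def by arith
      have nk0: "n - k > 0" using kn by arith
      show ?thesis using c' s' cD sD cF cne nk0 unfolding W_def Z_def V_def by (auto simp: dgc)
    qed
  qed (use DD in \<open>auto simp: W_def V_def\<close>)
  have "det W = det (1\<^sub>m (n - k) :: 'a mat) * det V"
    unfolding eq by (rule det_four_block_mat_lower_left_zero[OF I]) (auto simp: Z_def V_def)
  also have "det V = dtm (\<lambda>i z. z ^ (length xs - Suc i)) xs"
    unfolding dtm_def V_def len_xs by (intro arg_cong[of _ _ det] eq_matI) auto
  finally show ?thesis unfolding vandermonde_VP by simp
qed

lemma poly_sum_lt: "degree (q::'a poly) < d \<Longrightarrow> poly q a = (\<Sum>i<d. coeff q i * a ^ i)"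
proof -
  assume d: "degree q < d"
  have "poly q a = (\<Sum>i\<le>degree q. coeff q i * a ^ i)" by (rule poly_altdef)
  also have "\<dots> = (\<Sum>i<d. coeff q i * a ^ i)"
    by (rule sum.mono_neutral_left) (use d in \<open>auto simp: coeff_eq_0\<close>)
  finally show ?thesis .
qed

lemma poly_sum_dg: assumes "degree (q::'a poly) < D"
  shows "(\<Sum>c\<in>{0..<Suc D} - {n - k - 1}. coeff q (dg c) * a ^ (dg c)) = poly q a"
proof -
  have "(\<Sum>c\<in>{0..<Suc D} - {n - k - 1}. coeff q (dg c) * a ^ (dg c)) = (\<Sum>d<D. coeff q d * a ^ d)"
  proof (rule sum.reindex_bij_witness[where i = "\<lambda>d. if d \<ge> m + 1 then D - 1 - d else D - d" and j = dg])
    fix c assume c: "c \<in> {0..<Suc D} - {n - k - 1}"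
    show "dg c \<in> {..<D}" using c km kn unfolding dg_def D_def by auto
    show "(if dg c \<ge> m + 1 then D - 1 - dg c else D - dg c) = c" using c km kn unfolding dg_def D_def by auto
  next
    fix d assume d: "d \<in> {..<D}"
    show "(if d \<ge> m + 1 then D - 1 - d else D - d) \<in> {0..<Suc D} - {n - k - 1}"
      using d km kn unfolding D_def by auto
    show "dg (if d \<ge> m + 1 then D - 1 - d else D - d) = d"
      using d km kn unfolding dg_def D_def by auto
  qed simp
  also have "\<dots> = poly q a" using poly_sum_lt[OF assms] by simp
  finally show ?thesis .
qed

lemma deg_rp: "i < Suc D \<Longrightarrow> degree (rp i) < D"
proof -
  assume i: "i < Suc D"
  have f0: "f \<noteq> 0" using monf by auto
  have g0: "g \<noteq> 0" using degg kn by auto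
  show ?thesis
  proof (cases "i < n - k")
    case True
    then show ?thesis using km kn f0 unfolding rp_def D_def by (simp add: degree_mult_eq degree_monom_eq degf)
  next
    case False
    show ?thesis
    proof (cases "i < N")
      case True
      then show ?thesis using False km kn g0 unfolding rp_def D_def N_def by (simp add: degree_mult_eq degree_monom_eq degg)
    next
      case False2: False
      then show ?thesis using False i km kn unfolding rp_def D_def N_def by (simp add: degree_monom_eq)
    qed
  qed
qed

lemma TW_entry: assumes i: "i < Suc D" and s: "s < Suc D"
  shows "(T * W) $$ (i, s) = (if s < n - k then T $$ (i, s)
     else sp i * (if s = n - k then - poly f x else 0) + poly (rp i) (xs ! (s - (n - k))))"
proof -
  have "(T * W) $$ (i, s) = (\<Sum>c\<in>{0..<Suc D}. T $$ (i, c) * W $$ (c, s))"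
    using i s unfolding T_def W_def by (simp add: scalar_prod_def)
  also have "\<dots> = (if s < n - k then T $$ (i, s)
     else sp i * (if s = n - k then - poly f x else 0) + poly (rp i) (xs ! (s - (n - k))))"
  proof (cases "s < n - k")
    case True
    have "(\<Sum>c\<in>{0..<Suc D}. T $$ (i, c) * W $$ (c, s)) = (\<Sum>c\<in>{0..<Suc D}. if c = s then T $$ (i, c) else 0)"
      using True s unfolding W_def by (intro sum.cong) auto
    also have "\<dots> = T $$ (i, s)" using s by simp
    finally show ?thesis using True by simp
  next
    case False
    let ?a = "xs ! (s - (n - k))"
    have nk: "n - k - 1 \<in> {0..<Suc D}" unfolding D_def by auto
    have "(\<Sum>c\<in>{0..<Suc D}. T $$ (i, c) * W $$ (c, s)) =
       T $$ (i, n - k - 1) * W $$ (n - k - 1, s) + (\<Sum>c\<in>{0..<Suc D} - {n - k - 1}. T $$ (i, c) * W $$ (c, s))"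
      by (rule sum.remove[OF _ nk]) simp
    also have "T $$ (i, n - k - 1) * W $$ (n - k - 1, s) = sp i * (if s = n - k then - poly f x else 0)"
      using i s nk False unfolding T_def W_def by auto
    also have "(\<Sum>c\<in>{0..<Suc D} - {n - k - 1}. T $$ (i, c) * W $$ (c, s)) =
       (\<Sum>c\<in>{0..<Suc D} - {n - k - 1}. coeff (rp i) (dg c) * ?a ^ (dg c))"
      using i s False unfolding T_def W_def by (intro sum.cong) auto
    also have "\<dots> = poly (rp i) ?a" by (rule poly_sum_dg[OF deg_rp[OF i]])
    finally show ?thesis using False by simp
  qed
  finally show ?thesis .
qed


definition "Fb = mat (n - k) (n - k) (\<lambda>(i,s). T $$ (i,s))"
definition "Gt = mat (m + 1) (n - k) (\<lambda>(r,s). T $$ (n - k + r, s))"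
definition "GU = mat (m + 1) (m + 1) (\<lambda>(r,t). poly (rp (n - k + r)) (xs ! t))"

lemma DD: "Suc D = (n - k) + (m + 1)" using ND km kn unfolding D_def by auto

lemma TW_blocks: "T * W = four_block_mat Fb (0\<^sub>m (n - k) (m + 1)) Gt GU"
proof (rule eq_matI)
  fix i s assume i: "i < dim_row (four_block_mat Fb (0\<^sub>m (n - k) (m + 1)) Gt GU)"
    and s: "s < dim_col (four_block_mat Fb (0\<^sub>m (n - k) (m + 1)) Gt GU)"
  have dims: "dim_row Fb = n - k" "dim_col Fb = n - k" "dim_row GU = m + 1" "dim_col GU = m + 1"
    unfolding Fb_def GU_def by auto
  from i s have i': "i < (n - k) + (m + 1)" and s': "s < (n - k) + (m + 1)" using dims by auto
  then have iD: "i < Suc D" and sD: "s < Suc D" using DD by auto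
  show "(T * W) $$ (i, s) = four_block_mat Fb (0\<^sub>m (n - k) (m + 1)) Gt GU $$ (i, s)"
  proof (cases "s < n - k")
    case True
    then show ?thesis unfolding TW_entry[OF iD sD] using i' s' dims by (simp add: Fb_def Gt_def)
  next
    case sF: False
    let ?a = "xs ! (s - (n - k))"
    show ?thesis
    proof (cases "i < n - k")
      case True
      define j where "j = n - k - 1 - i"
      have rp: "rp i = monom 1 j * f" and sp: "sp i = x ^ j" using True unfolding rp_def sp_def j_def by auto
      have "sp i * (if s = n - k then - poly f x else 0) + poly (rp i) ?a = 0"
      proof (cases "s = n - k")
        case True
        then have "?a = x" unfolding xs_def by simp
        then show ?thesis using True unfolding rp sp by (simp add: poly_monom)
      next
        case False
        then have "?a \<in> set as" using sF s' len unfolding xs_def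
          by (cases "s - (n - k)") (auto simp: nth_Cons)
        then have "poly f ?a = 0" by (rule roots)
        then show ?thesis using False unfolding rp sp by (simp add: poly_monom)
      qed
      then show ?thesis unfolding TW_entry[OF iD sD] using i' s' dims True sF by simp
    next
      case iF: False
      have "sp i = 0" using iF by (rule sp_low[OF leI])
      moreover have "n - k + (i - (n - k)) = i" using iF by simp
      ultimately show ?thesis unfolding TW_entry[OF iD sD] using i' s' dims iF sF by (simp add: GU_def)
    qed
  qed
qed (auto simp: T_def W_def Fb_def GU_def DD)

lemma det_Fb: "det Fb = 1"
proof -
  have Fc: "Fb \<in> carrier_mat (n - k) (n - k)" unfolding Fb_def by auto
  have f0: "f \<noteq> 0" using monf by auto
  have ent: "Fb $$ (i,s) = (if s = n - k - 1 then x ^ (n - k - 1 - i) else if m + i < s then 0 else coeff f (m + i - s))"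
    if i: "i < n - k" and s: "s < n - k" for i s
  proof -
    have iD: "i < Suc D" and sD: "s < Suc D" using i s DD by auto
    have "Fb $$ (i,s) = T $$ (i,s)" unfolding Fb_def using i s by simp
    also have "\<dots> = (if s = n - k - 1 then sp i else coeff (rp i) (dg s))" unfolding T_def using iD sD by simp
    also have "\<dots> = (if s = n - k - 1 then x ^ (n - k - 1 - i) else if m + i < s then 0 else coeff f (m + i - s))"
    proof (cases "s = n - k - 1")
      case True
      then show ?thesis using i unfolding sp_def by simp
    next
      case False
      define u where "u = n - k - 1"
      have Du: "D = m + u + 1" unfolding u_def D_def using kn by simp
      have iu: "i \<le> u" and su: "s < u" using i s False unfolding u_def by auto
      have dgs: "dg s = D - 1 - s" using su unfolding dg_def u_def by simp
      have e1: "D - 1 - s = m + (u - s)" using Du su by simp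
      have e2: "(m + (u - s) < u - i) = (m + i < s)" using iu su by arith
      have e3: "m + (u - s) - (u - i) = m + i - s" using iu su by arith
      have rpi: "rp i = monom 1 (u - i) * f" using i unfolding rp_def u_def by simp
      show ?thesis using False unfolding dgs e1 rpi coeff_monom_mult e3 e2 by simp
    qed
    finally show ?thesis .
  qed
  have ut: "upper_triangular Fb" unfolding upper_triangular_def
  proof (intro allI impI)
    fix i s assume i: "i < dim_row Fb" and s: "s < i"
    then have i': "i < n - k" and s': "s < n - k" unfolding Fb_def by auto
    have "s \<noteq> n - k - 1" using i' s by arith
    moreover have "coeff f (m + i - s) = 0" using s by (intro coeff_eq_0) (simp add: degf)
    ultimately show "Fb $$ (i, s) = 0" using ent[OF i' s'] by simp
  qed
  have "diag_mat Fb = map (\<lambda>i. 1) [0..<n - k]" unfolding diag_mat_def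
  proof (intro map_cong)
    show "[0..<dim_row Fb] = [0..<n - k]" unfolding Fb_def by simp
    fix i assume "i \<in> set [0..<n - k]"
    then have i: "i < n - k" by simp
    show "Fb $$ (i, i) = 1"
      using ent[OF i i] monf by (cases "i = n - k - 1") auto
  qed
  moreover have "prod_list (map (\<lambda>i. 1::'a) xs) = 1" for xs :: "nat list" by (induct xs) auto
  ultimately show ?thesis using det_upper_triangular[OF ut Fc] by metis
qed

lemma det_GU: "det GU = VP xs * (\<Sum>P\<in>{P. P \<subseteq> set xs \<and> card P = m - k}. (\<Prod>a\<in>P. poly g a) / Res P (set xs - P))"
proof -
  have dist': "distinct xs" using dist unfolding xs_def by simp
  have p: "m - k \<le> length xs" using len_xs by simp
  have "GU = mat (length xs) (length xs) (\<lambda>(r,t). (\<lambda>r a. if r < m - k then a^(m - k - Suc r) * poly g a else a^(length xs - Suc r)) r (xs!t))"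
  proof (rule eq_matI)
    fix r t assume r: "r < dim_row (mat (length xs) (length xs) (\<lambda>(r,t). (\<lambda>r a. if r < m - k then a^(m - k - Suc r) * poly g a else a^(length xs - Suc r)) r (xs!t)))"
      and t: "t < dim_col (mat (length xs) (length xs) (\<lambda>(r,t). (\<lambda>r a. if r < m - k then a^(m - k - Suc r) * poly g a else a^(length xs - Suc r)) r (xs!t)))"
    then have r': "r < m + 1" and t': "t < m + 1" using len_xs by auto
    show "GU $$ (r,t) = mat (length xs) (length xs) (\<lambda>(r,t). (\<lambda>r a. if r < m - k then a^(m - k - Suc r) * poly g a else a^(length xs - Suc r)) r (xs!t)) $$ (r,t)"
    proof (cases "r < m - k")
      case True
      have "rp (n - k + r) = monom 1 (m - k - Suc r) * g"
        using True km kn unfolding rp_def N_def by auto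
      then show ?thesis using r' t' True len_xs unfolding GU_def by (simp add: poly_monom)
    next
      case False
      have "rp (n - k + r) = monom 1 (m - r)"
        using False km kn r' unfolding rp_def N_def D_def by auto
      then show ?thesis using r' t' False len_xs unfolding GU_def by (simp add: poly_monom)
    qed
  qed (auto simp: GU_def len_xs)
  then have "det GU = dtm (\<lambda>r a. if r < m - k then a^(m - k - Suc r) * poly g a else a^(length xs - Suc r)) xs"
    unfolding dtm_def by simp
  also have "\<dots> = VP xs * (\<Sum>P\<in>{P. P \<subseteq> set xs \<and> card P = m - k}. (\<Prod>a\<in>P. poly g a) / Res P (set xs - P))"
    by (rule GU_formula[OF dist' p])
  finally show ?thesis .
qed

lemma prod_nz: "finite A \<Longrightarrow> (\<And>a. a \<in> A \<Longrightarrow> h a \<noteq> (0::'b::idom)) \<Longrightarrow> prod h A \<noteq> 0"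
  by (induct rule: finite_induct) auto

lemma VP_nonzero: "distinct (ys::'a list) \<Longrightarrow> VP ys \<noteq> 0"
  unfolding VP_def by (intro prod_nz) (auto simp: nth_eq_iff_index_eq)

theorem core: "det (Smat m n k f g x) =
  (-1)^(m - k) * (\<Sum>P\<in>{P. P \<subseteq> set xs \<and> card P = m - k}. (\<Prod>a\<in>P. poly g a) / Res P (set xs - P))"
proof -
  have Tc: "T \<in> carrier_mat (Suc D) (Suc D)" unfolding T_def by simp
  have Wc: "W \<in> carrier_mat (Suc D) (Suc D)" unfolding W_def by simp
  have Fc: "Fb \<in> carrier_mat (n - k) (n - k)" unfolding Fb_def by auto
  have Gc: "Gt \<in> carrier_mat (m + 1) (n - k)" unfolding Gt_def by auto
  have GUc: "GU \<in> carrier_mat (m + 1) (m + 1)" unfolding GU_def by auto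
  have "det T * det W = det (T * W)" by (rule det_mult[OF Tc Wc, symmetric])
  also have "\<dots> = det Fb * det GU" unfolding TW_blocks
    by (rule det_four_block_mat_upper_right_zero[OF Fc refl Gc GUc])
  finally have "det T * VP xs = VP xs * (\<Sum>P\<in>{P. P \<subseteq> set xs \<and> card P = m - k}. (\<Prod>a\<in>P. poly g a) / Res P (set xs - P))"
    unfolding det_W det_Fb det_GU by simp
  moreover have "VP xs \<noteq> 0" using dist unfolding xs_def by (intro VP_nonzero) simp
  ultimately have "det T = (\<Sum>P\<in>{P. P \<subseteq> set xs \<and> card P = m - k}. (\<Prod>a\<in>P. poly g a) / Res P (set xs - P))"
    by (simp add: mult.commute)
  then show ?thesis unfolding det_Smat det_T by simp
qed

end


lemma const_rf_to_fract: "const_rf a = to_fract [:a:]"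
  unfolding const_rf_def to_fract_def ..

lemma const_rf_0[simp]: "const_rf 0 = 0" unfolding const_rf_to_fract by simp
lemma const_rf_1[simp]: "const_rf 1 = 1" unfolding const_rf_to_fract by (simp add: one_pCons[symmetric])
lemma const_rf_add: "const_rf (a + b) = const_rf a + const_rf b"
  unfolding const_rf_to_fract by (simp flip: to_fract_add)
lemma const_rf_mult: "const_rf (a * b) = const_rf a * const_rf b"
  unfolding const_rf_to_fract by (simp flip: to_fract_mult)
lemma const_rf_uminus: "const_rf (- a) = - const_rf a"
  unfolding const_rf_to_fract by (simp flip: to_fract_uminus)
lemma const_rf_diff: "const_rf (a - b) = const_rf a - const_rf b"
  unfolding const_rf_to_fract by (simp flip: to_fract_diff)
lemma const_rf_inj: "inj const_rf"
  unfolding inj_def const_rf_to_fract by simp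

lemma X_rf_not_const: "X_rf \<noteq> const_rf a"
  unfolding X_rf_def const_rf_def by (simp add: eq_fract)

lemma coeff_lin_mult: "coeff ([:c, 1:] * (P :: 'b::comm_ring_1 poly)) e = c * coeff P e + (if e = 0 then 0 else coeff P (e - 1))"
  by (simp add: coeff_pCons')

lemma coeff_lin_prod:
  assumes "finite S"
  shows "coeff (\<Prod>a\<in>S. [:- const_rf a, 1:]) e = const_rf (coeff (\<Prod>a\<in>S. [:- a, 1:]) e)"
  using assms
proof (induct S arbitrary: e rule: finite_induct)
  case empty
  then show ?case by simp
next
  case (insert a S)
  have "coeff (\<Prod>a\<in>insert a S. [:- const_rf a, 1:]) e =
     coeff ([:- const_rf a, 1:] * (\<Prod>a\<in>S. [:- const_rf a, 1:])) e" using insert by simp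
  also have "\<dots> = - const_rf a * const_rf (coeff (\<Prod>a\<in>S. [:- a, 1:]) e) +
     (if e = 0 then 0 else const_rf (coeff (\<Prod>a\<in>S. [:- a, 1:]) (e - 1)))"
    unfolding coeff_lin_mult insert by simp
  also have "\<dots> = const_rf (coeff ([:- a, 1:] * (\<Prod>a\<in>S. [:- a, 1:])) e)"
    unfolding coeff_lin_mult by (simp add: const_rf_add const_rf_mult const_rf_uminus const_rf_diff)
  also have "[:- a, 1:] * (\<Prod>a\<in>S. [:- a, 1:]) = (\<Prod>a\<in>insert a S. [:- a, 1:])" using insert by simp
  finally show ?case .
qed

lemma lin_prod_image:
  assumes "finite S"
  shows "(\<Prod>a\<in>const_rf ` S. [:- a, 1:]) = (\<Prod>a\<in>S. [:- const_rf a, 1:])"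
  using prod.reindex[OF inj_on_subset[OF const_rf_inj subset_UNIV], of "\<lambda>a. [:- a, 1:]" S] by simp

lemma deg_lin_prod: "finite S \<Longrightarrow> degree (\<Prod>a\<in>S. [:- a, 1:]) = card (S :: 'b::field set)"
  by (subst degree_prod_sum_eq) auto

lemma lc_lin_prod: "lead_coeff (\<Prod>a\<in>S. [:- a, 1:]) = (1 :: 'b::field)"
  by (simp add: lead_coeff_prod)

lemma poly_lin_prod: "poly (\<Prod>b\<in>S. [:- b, 1:]) a = (\<Prod>b\<in>S. a - (b::'b::comm_ring_1))"
  unfolding poly_prod by (rule prod.cong) auto

lemma to_rf_monom: "to_rf (monom (1::'a::field) j) = X_rf ^ j"
proof (induct j)
  case 0
  then show ?case by (simp add: to_rf_def monom_0 One_fract_def one_pCons)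
next
  case (Suc j)
  have m1: "(monom 1 1 :: 'a poly) = [:0, 1:]" by (simp add: monom_Suc monom_0)
  have "(monom 1 (Suc j) :: 'a poly) = monom 1 j * [:0, 1:]"
    using mult_monom[of "1::'a" j 1 1] unfolding m1 by simp
  then have "to_rf (monom (1::'a) (Suc j)) = to_rf (monom 1 j * [:0, 1:])" by (rule arg_cong)
  also have "\<dots> = to_rf (monom 1 j) * X_rf"
    unfolding to_rf_def X_rf_def by (simp add: mult_fract)
  finally have "to_rf (monom (1::'a) (Suc j)) = to_rf (monom 1 j) * X_rf" .
  then show ?case using Suc by simp
qed

lemma Res_swap:
  assumes "finite Y" "finite Z"
  shows "Res Y Z = (-1)^(card Y * card Z) * (Res Z Y :: 'b::comm_ring_1)"
proof -
  have "Res Y Z = (\<Prod>y\<in>Y. \<Prod>z\<in>Z. (-1) * (z - y))" unfolding Res_def by simp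
  also have "\<dots> = (\<Prod>y\<in>Y. (-1)^card Z * (\<Prod>z\<in>Z. (z - y)))"
    by (simp only: prod.distrib prod_constant)
  also have "\<dots> = ((-1)^card Z)^card Y * (\<Prod>y\<in>Y. \<Prod>z\<in>Z. (z - y))"
    by (simp only: prod.distrib prod_constant)
  also have "((-1::'b)^card Z)^card Y = (-1)^(card Y * card Z)"
    by (simp add: power_mult[symmetric] mult.commute)
  also have "(\<Prod>y\<in>Y. \<Prod>z\<in>Z. (z - y)) = Res Z Y" unfolding Res_def by (rule prod.swap)
  finally show ?thesis .
qed


lemma to_rf_const: "to_rf [:c:] = const_rf c" unfolding to_rf_def const_rf_def ..
lemma to_rf_zero: "to_rf 0 = 0" unfolding to_rf_def by (simp add: Zero_fract_def)

lemma neg1_div: "(x::'b::field) / ((-1)^e * r) = (-1)^e * (x / r)"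
  by (cases "even e") simp_all

lemma to_rf_eq: "to_rf = to_fract"
  by (rule ext) (simp add: to_rf_def to_fract_def)

lemma to_rf_det: "to_rf (det M) = det (map_mat to_rf (M :: 'a::field poly mat))"
proof -
  interpret h: comm_ring_hom "to_fract :: 'a poly \<Rightarrow> 'a poly fract" by (unfold_locales) auto
  show ?thesis unfolding to_rf_eq by simp
qed

lemma reindex_compl:
  fixes X :: "'b::field set" and B :: "'b set"
  assumes fX: "finite X" and cX: "card X = m + 1" and km: "k \<le> m"
  shows "(\<Sum>C\<in>{C. C \<subseteq> X \<and> card C = k + 1}. Res (X - C) B / Res C (X - C)) =
    (-1)^((k + 1) * (m - k)) * (\<Sum>P\<in>{P. P \<subseteq> X \<and> card P = m - k}. Res P B / Res P (X - P))"
proof -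
  have "(\<Sum>C\<in>{C. C \<subseteq> X \<and> card C = k + 1}. Res (X - C) B / Res C (X - C)) =
     (\<Sum>P\<in>{P. P \<subseteq> X \<and> card P = m - k}. (-1)^((k + 1) * (m - k)) * (Res P B / Res P (X - P)))"
  proof (rule sum.reindex_bij_witness[where i = "\<lambda>P. X - P" and j = "\<lambda>C. X - C"])
    fix C assume C: "C \<in> {C. C \<subseteq> X \<and> card C = k + 1}"
    then have CX: "C \<subseteq> X" and cC: "card C = k + 1" by auto
    have fC: "finite C" using CX fX finite_subset by blast
    show "X - (X - C) = C" using CX by auto
    have cXC: "card (X - C) = m - k" using cC cX CX fC by (simp add: card_Diff_subset)
    then show "X - C \<in> {P. P \<subseteq> X \<and> card P = m - k}" by auto
    have XC: "X - (X - C) = C" using CX by auto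
    have sw: "Res C (X - C) = (-1)^((k + 1) * (m - k)) * Res (X - C) C"
      using Res_swap[of C "X - C"] fX fC cXC cC by simp
    show "(-1)^((k + 1) * (m - k)) * (Res (X - C) B / Res (X - C) (X - (X - C))) = Res (X - C) B / Res C (X - C)"
      unfolding XC sw neg1_div ..
  next
    fix P assume P: "P \<in> {P. P \<subseteq> X \<and> card P = m - k}"
    then have PX: "P \<subseteq> X" and cP: "card P = m - k" by auto
    have fP: "finite P" using PX fX finite_subset by blast
    show "X - (X - P) = P" using PX by auto
    have cXP: "card (X - P) = k + 1" using cP cX PX fP km by (simp add: card_Diff_subset)
    then show "X - P \<in> {C. C \<subseteq> X \<and> card C = k + 1}" by auto
  qed
  then show ?thesis by (simp add: sum_distrib_left)
qed

lemma F_part: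
  fixes A B :: "'a::field set" and k :: nat
  assumes fA: "finite A" and fB: "finite B" and kA: "k + 1 \<le> card A" and kB: "k + 1 \<le> card B"
  shows "to_rf (Fk (card A) (card B) k (\<Prod>a\<in>A. [:- a, 1:]) (\<Prod>b\<in>B. [:- b, 1:])) =
    (-1) ^ (k * (card A - k)) * (\<Sum>C\<in>{C. C \<subseteq> insert X_rf (const_rf ` A) \<and> card C = k + 1}.
      Res (insert X_rf (const_rf ` A) - C) (const_rf ` B) / Res C (insert X_rf (const_rf ` A) - C))"
proof -
  define m where "m = card A"
  define n where "n = card B"
  define f where "f = (\<Prod>a\<in>A. [:- a, 1:])"
  define g where "g = (\<Prod>b\<in>B. [:- b, 1:])"
  define A' where "A' = const_rf ` A"
  define B' where "B' = const_rf ` B"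
  define F where "F = (\<Prod>a\<in>A'. [:- a, 1:])"
  define G where "G = (\<Prod>b\<in>B'. [:- b, 1:])"
  define AX where "AX = insert X_rf A'"
  have injc: "inj_on const_rf S" for S by (rule inj_on_subset[OF const_rf_inj subset_UNIV])
  have fA': "finite A'" "finite B'" unfolding A'_def B'_def using fA fB by auto
  have cA': "card A' = m" "card B' = n" unfolding A'_def B'_def m_def n_def
    using card_image[OF injc] by auto
  obtain as where as: "set as = A'" "distinct as" using finite_distinct_list[OF fA'(1)] by blast
  have las: "length as = m" using distinct_card[OF as(2)] as(1) cA' by simp
  have XA: "X_rf \<notin> A'" unfolding A'_def using X_rf_not_const by auto
  have cF: "coeff F e = const_rf (coeff f e)" for e
    unfolding F_def f_def A'_def lin_prod_image[OF fA] by (rule coeff_lin_prod[OF fA])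
  have cG: "coeff G e = const_rf (coeff g e)" for e
    unfolding G_def g_def B'_def lin_prod_image[OF fB] by (rule coeff_lin_prod[OF fB])
  interpret SR m n k F G X_rf as
  proof
    show "k + 1 \<le> m" "k + 1 \<le> n" using kA kB m_def n_def by auto
    show dF: "degree F = m" unfolding F_def using deg_lin_prod[OF fA'(1)] cA' by simp
    show "coeff F m = 1" using lc_lin_prod[of A'] dF unfolding F_def by simp
    show "degree G = n" unfolding G_def using deg_lin_prod[OF fA'(2)] cA' by simp
    show "poly F a = 0" if "a \<in> set as" for a
      using that as fA' unfolding F_def poly_lin_prod by simp
    show "distinct (X_rf # as)" using as XA by simp
    show "length as = m" by (rule las)
  qed
  have setxs: "set xs = AX" unfolding xs_def AX_def using as by simp
  have mat: "map_mat to_rf (sres_mat True m n k f g) = Smat m n k F G X_rf"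
  proof (rule eq_matI)
    fix i c assume i: "i < dim_row (Smat m n k F G X_rf)" and c: "c < dim_col (Smat m n k F G X_rf)"
    then have i': "i < m + n - 2 * k" and c': "c < m + n - 2 * k" unfolding Smat_def Let_def by auto
    show "map_mat to_rf (sres_mat True m n k f g) $$ (i, c) = Smat m n k F G X_rf $$ (i, c)"
      using i' c' unfolding sres_mat_def Smat_def Let_def
      by (auto simp: shcoeff_def to_rf_monom cF cG to_rf_const to_rf_zero)
  qed (auto simp: sres_mat_def Smat_def Let_def)
  have "to_rf (Fk m n k f g) = det (Smat m n k F G X_rf)"
    unfolding Fk_def to_rf_det mat ..
  also have "\<dots> = (-1)^(m - k) * (\<Sum>P\<in>{P. P \<subseteq> AX \<and> card P = m - k}. Res P B' / Res P (AX - P))"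
  proof -
    have "(\<Prod>a\<in>P. poly G a) = Res P B'" for P unfolding G_def Res_def poly_lin_prod ..
    then show ?thesis unfolding core setxs by simp
  qed
  also have "\<dots> = (-1)^(k * (m - k)) * (\<Sum>C\<in>{C. C \<subseteq> AX \<and> card C = k + 1}. Res (AX - C) B' / Res C (AX - C))"
  proof -
    have fX: "finite AX" unfolding AX_def using fA' by simp
    have cX: "card AX = m + 1" unfolding AX_def using fA' XA cA' by simp
    have km': "k \<le> m" using kA m_def by simp
    have "(-1::'a poly fract)^(k * (m - k)) * (-1)^((k + 1) * (m - k)) = (-1)^(m - k)"
    proof -
      have "k * d + (k + 1) * d = 2 * (k * d) + d" for d :: nat by (simp add: algebra_simps)
      then have e: "k * (m - k) + (k + 1) * (m - k) = 2 * (k * (m - k)) + (m - k)" .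
      have "(-1::'a poly fract)^(k * (m - k)) * (-1)^((k + 1) * (m - k)) = (-1)^(k * (m - k) + (k + 1) * (m - k))"
        by (simp only: power_add)
      also have "\<dots> = (-1)^(2 * (k * (m - k)) + (m - k))" by (simp only: e)
      also have "\<dots> = (-1)^(m - k)" by (simp only: power_add power_mult) simp
      finally show ?thesis .
    qed
    then show ?thesis unfolding reindex_compl[OF fX cX km'] by (simp add: mult.assoc[symmetric])
  qed
  finally show ?thesis unfolding m_def n_def f_def g_def AX_def A'_def B'_def .
qed


lemma G_swap:
  assumes km: "k + 1 \<le> m" and kn: "k + 1 \<le> n"
  shows "Gk m n k f g = (-1)^((m - k) * (n - k)) * Fk n m k g (f :: 'a::comm_ring_1 poly)"
proof -
  let ?A = "sres_mat False m n k f g"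
  have NN: "m + n - 2 * k = (m - k) + (n - k)" using km kn by auto
  have A: "?A \<in> carrier_mat ((m - k) + (n - k)) ((m - k) + (n - k))"
    unfolding sres_mat_def Let_def NN by simp
  have "det ?A = (-1)^((m - k) * (n - k)) * det (mat ((m - k) + (n - k)) ((m - k) + (n - k)) (\<lambda>(i,j).
     ?A $$ ((if i < m - k then i + (n - k) else i - (m - k)), j)))"
    by (rule det_swap_rows[OF A])
  also have "mat ((m - k) + (n - k)) ((m - k) + (n - k)) (\<lambda>(i,j).
     ?A $$ ((if i < m - k then i + (n - k) else i - (m - k)), j)) = sres_mat True n m k g f"
  proof (rule eq_matI)
    fix i j assume i: "i < dim_row (sres_mat True n m k g f)" and j: "j < dim_col (sres_mat True n m k g f)"
    then have i': "i < (m - k) + (n - k)" and j': "j < (m - k) + (n - k)"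
      unfolding sres_mat_def Let_def using NN by (auto simp: add.commute)
    have i2: "i < m + n - 2 * k" "j < m + n - 2 * k" using i' j' NN by simp_all
    show "mat ((m - k) + (n - k)) ((m - k) + (n - k)) (\<lambda>(i,j).
     ?A $$ ((if i < m - k then i + (n - k) else i - (m - k)), j)) $$ (i, j) = sres_mat True n m k g f $$ (i, j)"
    proof (cases "i < m - k")
      case True
      have r: "i + (n - k) < m + n - 2 * k" using i' NN True by simp
      show ?thesis using True i' j' i2 r unfolding sres_mat_def Let_def by (simp add: add.commute[of n m])
    next
      case False
      have r: "i - (m - k) < m + n - 2 * k" "i - (m - k) < n - k" using i' NN False by auto
      show ?thesis using False i' j' i2 r unfolding sres_mat_def Let_def by (simp add: add.commute[of n m])
    qed
  qed (auto simp: sres_mat_def Let_def NN add.commute)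
  finally show ?thesis unfolding Gk_def Fk_def .
qed

theorem proposition3p12:
  fixes A B :: "'a::field set" and k :: nat
  assumes "finite A" and "finite B"
    and "k + 1 \<le> card A" and "k + 1 \<le> card B"
  defines "f \<equiv> (\<Prod>a\<in>A. [:- a, 1:])"
    and "g \<equiv> (\<Prod>b\<in>B. [:- b, 1:])"
    and "AX \<equiv> insert X_rf (const_rf ` A)"
    and "BX \<equiv> insert X_rf (const_rf ` B)"
  shows "to_rf (Fk (card A) (card B) k f g) =
           (-1) ^ (k * (card A - k)) *
           (\<Sum>C\<in>{C. C \<subseteq> AX \<and> card C = k + 1}.
               Res (AX - C) (const_rf ` B) / Res C (AX - C)) \<and>
         to_rf (Gk (card A) (card B) k f g) =
           (-1) ^ (card A * (card B - k)) *
           (\<Sum>D\<in>{D. D \<subseteq> BX \<and> card D = k + 1}.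
               Res (BX - D) (const_rf ` A) / Res D (BX - D))"
proof
  show "to_rf (Fk (card A) (card B) k f g) =
           (-1) ^ (k * (card A - k)) *
           (\<Sum>C\<in>{C. C \<subseteq> AX \<and> card C = k + 1}.
               Res (AX - C) (const_rf ` B) / Res C (AX - C))"
    unfolding f_def g_def AX_def by (rule F_part) (use assms in auto)
next
  have hom: "to_rf ((-1)^e * p) = (-1)^e * to_rf p" for e and p :: "'a poly"
  proof -
    interpret h: comm_ring_hom "to_fract :: 'a poly \<Rightarrow> 'a poly fract" by (unfold_locales) auto
    show ?thesis unfolding to_rf_eq by (simp add: h.hom_mult h.hom_power h.hom_uminus)
  qed
  have "to_rf (Gk (card A) (card B) k f g) = (-1)^((card A - k) * (card B - k)) * to_rf (Fk (card B) (card A) k g f)"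
    unfolding G_swap[OF assms(3,4)] hom ..
  also have "to_rf (Fk (card B) (card A) k g f) = (-1) ^ (k * (card B - k)) *
      (\<Sum>D\<in>{D. D \<subseteq> BX \<and> card D = k + 1}. Res (BX - D) (const_rf ` A) / Res D (BX - D))"
    unfolding f_def g_def BX_def by (rule F_part) (use assms in auto)
  also have "(-1::'a poly fract)^((card A - k) * (card B - k)) * ((-1) ^ (k * (card B - k)) *
      (\<Sum>D\<in>{D. D \<subseteq> BX \<and> card D = k + 1}. Res (BX - D) (const_rf ` A) / Res D (BX - D))) =
      (-1)^(card A * (card B - k)) *
      (\<Sum>D\<in>{D. D \<subseteq> BX \<and> card D = k + 1}. Res (BX - D) (const_rf ` A) / Res D (BX - D))"
  proof -
    have "(card A - k) * (card B - k) + k * (card B - k) = card A * (card B - k)"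
      using assms(3) by (simp add: add_mult_distrib[symmetric])
    then have "(-1::'a poly fract)^((card A - k) * (card B - k)) * (-1) ^ (k * (card B - k)) = (-1)^(card A * (card B - k))"
      by (simp only: power_add[symmetric])
    then show ?thesis by (simp only: mult.assoc[symmetric])
  qed
  finally show "to_rf (Gk (card A) (card B) k f g) =
           (-1) ^ (card A * (card B - k)) *
           (\<Sum>D\<in>{D. D \<subseteq> BX \<and> card D = k + 1}.
               Res (BX - D) (const_rf ` A) / Res D (BX - D))" .
qed


end
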